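(* Let $R$ be a ring, $M$ a Tate $R$-module and $T\in\operatorname{End}M$ a continuous endomorphism. The following are equivalent: (i) $T^n\to0$ as $n\to\infty$, meaning that for all lattices $L,L'\subset M$ there exists $N$ such that $T^nL'\subset L$ for all $n>N$; (ii) there exists a (unique) structure of topological $R[[t]]$-module on $M$ (extending its topological $R$-module structure, $R[[t]]$ having the $t$-adic topology) such that $T$ acts as multiplication by $t$.
   Context: A Tate $R$-module is a topological direct summand of $P\oplus Q^*$ with $P$ a discrete projective left $R$-module, $Q$ a discrete projective right $R$-module and $Q^*=\operatorname{Hom}_R(Q,R)$ with the topology of pointwise convergence. A lattice in $M$ is an open submodule $L$ such that $L/U$ is finitely generated for every open submodule $U\subset L$. *)

theory Defs
  imports "HOL-Analysis.Analysis" "HOL-Computational_Algebra.Formal_Power_Series"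
begin

definition lmod :: "('r::ring_1 \<Rightarrow> 'a::ab_group_add \<Rightarrow> 'a) \<Rightarrow> bool" where
  "lmod s \<longleftrightarrow> (\<forall>r t x y.
      s r (x + y) = s r x + s r y \<and> s (r + t) x = s r x + s t x \<and>
      s (r * t) x = s r (s t x) \<and> s 1 x = x)"

definition rmod :: "('a::ab_group_add \<Rightarrow> 'r::ring_1 \<Rightarrow> 'a) \<Rightarrow> bool" where
  "rmod s \<longleftrightarrow> (\<forall>r t x y.
      s (x + y) r = s x r + s y r \<and> s x (r + t) = s x r + s x t \<and>
      s x (r * t) = s (s x r) t \<and> s x 1 = x)"

text \<open>Projective left module: direct summand of a free module, namely the canonical
  epimorphism from the free module on the underlying set,
  c \<mapsto> sum over x of c(x)x, admits an R-linear section.\<close>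
definition lprojective :: "('r::ring_1 \<Rightarrow> 'a::ab_group_add \<Rightarrow> 'a) \<Rightarrow> bool" where
  "lprojective s \<longleftrightarrow> lmod s \<and> (\<exists>\<sigma> :: 'a \<Rightarrow> 'a \<Rightarrow> 'r.
      (\<forall>x. finite {y. \<sigma> x y \<noteq> 0}) \<and>
      (\<forall>x y. \<sigma> (x + y) = (\<lambda>z. \<sigma> x z + \<sigma> y z)) \<and>
      (\<forall>r x. \<sigma> (s r x) = (\<lambda>z. r * \<sigma> x z)) \<and>
      (\<forall>x. (\<Sum>y\<in>{y. \<sigma> x y \<noteq> 0}. s (\<sigma> x y) y) = x))"

definition rprojective :: "('a::ab_group_add \<Rightarrow> 'r::ring_1 \<Rightarrow> 'a) \<Rightarrow> bool" where
  "rprojective s \<longleftrightarrow> rmod s \<and> (\<exists>\<sigma> :: 'a \<Rightarrow> 'a \<Rightarrow> 'r.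
      (\<forall>x. finite {y. \<sigma> x y \<noteq> 0}) \<and>
      (\<forall>x y. \<sigma> (x + y) = (\<lambda>z. \<sigma> x z + \<sigma> y z)) \<and>
      (\<forall>r x. \<sigma> (s x r) = (\<lambda>z. \<sigma> x z * r)) \<and>
      (\<forall>x. (\<Sum>y\<in>{y. \<sigma> x y \<noteq> 0}. s y (\<sigma> x y)) = x))"

definition rdual :: "('q::ab_group_add \<Rightarrow> 'r::ring_1 \<Rightarrow> 'q) \<Rightarrow> ('q \<Rightarrow> 'r) set" where
  "rdual sQ = {f. (\<forall>x y. f (x + y) = f x + f y) \<and> (\<forall>x r. f (sQ x r) = f x * r)}"

definition rdual_top :: "('q::ab_group_add \<Rightarrow> 'r::ring_1 \<Rightarrow> 'q) \<Rightarrow> ('q \<Rightarrow> 'r) topology" where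
  "rdual_top sQ = subtopology (product_topology (\<lambda>_. discrete_topology (UNIV::'r set)) UNIV) (rdual sQ)"

definition PQ_top :: "('q::ab_group_add \<Rightarrow> 'r::ring_1 \<Rightarrow> 'q) \<Rightarrow> ('p \<times> ('q \<Rightarrow> 'r)) topology" where
  "PQ_top sQ = prod_topology (discrete_topology UNIV) (rdual_top sQ)"

definition PQ_add :: "'p::ab_group_add \<times> ('q \<Rightarrow> 'r::ring_1) \<Rightarrow> 'p \<times> ('q \<Rightarrow> 'r) \<Rightarrow> 'p \<times> ('q \<Rightarrow> 'r)" where
  "PQ_add a b = (fst a + fst b, \<lambda>q. snd a q + snd b q)"

definition PQ_scale :: "('r::ring_1 \<Rightarrow> 'p::ab_group_add \<Rightarrow> 'p) \<Rightarrow> 'r \<Rightarrow> 'p \<times> ('q \<Rightarrow> 'r) \<Rightarrow> 'p \<times> ('q \<Rightarrow> 'r)" where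
  "PQ_scale sP r a = (sP r (fst a), \<lambda>q. r * snd a q)"

text \<open>(s, \<tau>) is a Tate module, witnessed by P (discrete projective left module),
  Q (discrete projective right module), and continuous R-linear maps
  i : M \<rightarrow> P \<oplus> Q*, pr : P \<oplus> Q* \<rightarrow> M with pr \<circ> i = id, i.e. M is a topological direct
  summand of P \<oplus> Q*.\<close>
definition tate_witness ::
  "('r::ring_1 \<Rightarrow> 'm::ab_group_add \<Rightarrow> 'm) \<Rightarrow> 'm topology \<Rightarrow>
   ('r \<Rightarrow> 'p::ab_group_add \<Rightarrow> 'p) \<Rightarrow> ('q::ab_group_add \<Rightarrow> 'r \<Rightarrow> 'q) \<Rightarrow>
   ('m \<Rightarrow> 'p \<times> ('q \<Rightarrow> 'r)) \<Rightarrow> ('p \<times> ('q \<Rightarrow> 'r) \<Rightarrow> 'm) \<Rightarrow> bool" where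
  "tate_witness s \<tau> sP sQ i pr \<longleftrightarrow>
     lmod s \<and> topspace \<tau> = UNIV \<and> lprojective sP \<and> rprojective sQ \<and>
     continuous_map \<tau> (PQ_top sQ) i \<and> continuous_map (PQ_top sQ) \<tau> pr \<and>
     (\<forall>x y. i (x + y) = PQ_add (i x) (i y)) \<and> (\<forall>r x. i (s r x) = PQ_scale sP r (i x)) \<and>
     (\<forall>a\<in>topspace (PQ_top sQ). \<forall>b\<in>topspace (PQ_top sQ). pr (PQ_add a b) = pr a + pr b) \<and>
     (\<forall>r. \<forall>a\<in>topspace (PQ_top sQ). pr (PQ_scale sP r a) = s r (pr a)) \<and>
     (\<forall>x. pr (i x) = x)"

definition lsubmod :: "('r::ring_1 \<Rightarrow> 'm::ab_group_add \<Rightarrow> 'm) \<Rightarrow> 'm set \<Rightarrow> bool" where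
  "lsubmod s L \<longleftrightarrow> 0 \<in> L \<and> (\<forall>x\<in>L. \<forall>y\<in>L. x + y \<in> L) \<and> (\<forall>r. \<forall>x\<in>L. s r x \<in> L)"

text \<open>L/U is finitely generated (U \<subseteq> L submodules).\<close>
definition fg_quotient :: "('r::ring_1 \<Rightarrow> 'm::ab_group_add \<Rightarrow> 'm) \<Rightarrow> 'm set \<Rightarrow> 'm set \<Rightarrow> bool" where
  "fg_quotient s L U \<longleftrightarrow> (\<exists>F. finite F \<and> F \<subseteq> L \<and>
      (\<forall>x\<in>L. \<exists>c :: 'm \<Rightarrow> 'r. x - (\<Sum>f\<in>F. s (c f) f) \<in> U))"

definition lattice :: "('r::ring_1 \<Rightarrow> 'm::ab_group_add \<Rightarrow> 'm) \<Rightarrow> 'm topology \<Rightarrow> 'm set \<Rightarrow> bool" where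
  "lattice s \<tau> L \<longleftrightarrow> openin \<tau> L \<and> lsubmod s L \<and>
     (\<forall>U. openin \<tau> U \<and> lsubmod s U \<and> U \<subseteq> L \<longrightarrow> fg_quotient s L U)"

text \<open>S is a structure of topological R[[t]]-module on M (R[[t]] with the t-adic topology,
  which is the library's metric topology on fps) extending the R-module structure s,
  with the same topology \<tau>, such that t acts as T.\<close>
definition tadic_structure ::
  "('r::ring_1 \<Rightarrow> 'm::ab_group_add \<Rightarrow> 'm) \<Rightarrow> 'm topology \<Rightarrow> ('m \<Rightarrow> 'm) \<Rightarrow>
   ('r fps \<Rightarrow> 'm \<Rightarrow> 'm) \<Rightarrow> bool" where
  "tadic_structure s \<tau> T S \<longleftrightarrow> lmod S \<and>
     (\<forall>r x. S (fps_const r) x = s r x) \<and> (\<forall>x. S fps_X x = T x) \<and>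
     continuous_map (prod_topology euclidean \<tau>) \<tau> (\<lambda>(f, x). S f x) \<and>
     continuous_map (prod_topology \<tau> \<tau>) \<tau> (\<lambda>(x, y). x + y)"

end

theory Submission
  imports Defs
begin

lemma lmod_add: "lmod s \<Longrightarrow> s r (x + y) = s r x + s r y"
  unfolding lmod_def by blast
lemma lmod_radd: "lmod s \<Longrightarrow> s (r + t) x = s r x + s t x"
  unfolding lmod_def by blast
lemma lmod_mult: "lmod s \<Longrightarrow> s (r * t) x = s r (s t x)"
  unfolding lmod_def by blast
lemma lmod_one: "lmod s \<Longrightarrow> s 1 x = x"
  unfolding lmod_def by blast
lemma lmod_zero: "lmod s \<Longrightarrow> s r 0 = 0"
  using lmod_add[of s r 0 0] by simp
lemma lmod_rzero: "lmod s \<Longrightarrow> s 0 x = 0"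
  using lmod_radd[of s 0 0 x] by simp
lemma lmod_minus: "lmod s \<Longrightarrow> s r (- x) = - s r x"
  using lmod_add[of s r x "- x"] lmod_zero[of s r] by (simp add: eq_neg_iff_add_eq_0 add.commute)
lemma lmod_diff: "lmod s \<Longrightarrow> s r (x - y) = s r x - s r y"
  using lmod_add[of s r x "- y"] lmod_minus[of s r y] by simp
lemma lmod_sum: "lmod s \<Longrightarrow> s r (\<Sum>a\<in>A. f a) = (\<Sum>a\<in>A. s r (f a))"
  by (induction A rule: infinite_finite_induct) (auto simp: lmod_zero lmod_add)
lemma lmod_rsum: "lmod s \<Longrightarrow> s (\<Sum>a\<in>A. f a) x = (\<Sum>a\<in>A. s (f a) x)"
  by (induction A rule: infinite_finite_induct) (auto simp: lmod_rzero lmod_radd)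

lemma additive_0: "(\<And>x y. g (x + y) = g x + g y) \<Longrightarrow> g (0::'a::ab_group_add) = (0::'b::ab_group_add)"
proof -
  assume h: "\<And>x y. g (x + y) = g x + g y"
  have "g 0 = g 0 + g 0" using h[of 0 0] by simp
  then show ?thesis by simp
qed
lemma additive_diff: "(\<And>x y. g (x + y) = g x + (g y::'b::ab_group_add)) \<Longrightarrow> g ((x::'a::ab_group_add) - y) = g x - g y"
proof -
  assume h: "\<And>x y. g (x + y) = g x + (g y::'b::ab_group_add)"
  have "g x = g (x - y) + g y" using h[of "x - y" y] by simp
  then show ?thesis by (simp add: algebra_simps)
qed
lemma additive_sum: "(\<And>x y. g (x + y) = g x + (g y::'b::ab_group_add)) \<Longrightarrow> g (\<Sum>a\<in>A. (f a::'a::ab_group_add)) = (\<Sum>a\<in>A. g (f a))"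
  by (induction A rule: infinite_finite_induct) (auto simp: additive_0)

lemma lsubmod_sum: "lsubmod s L \<Longrightarrow> (\<And>a. a \<in> A \<Longrightarrow> f a \<in> L) \<Longrightarrow> (\<Sum>a\<in>A. f a) \<in> L"
  unfolding lsubmod_def by (induction A rule: infinite_finite_induct) auto

lemma fg_index:
  assumes "lmod s" "finite Y" "g ` Y \<subseteq> L"
    and "\<And>x. x \<in> L \<Longrightarrow> \<exists>c. x - (\<Sum>y\<in>Y. s (c y) (g y)) \<in> U"
  shows "fg_quotient s L U"
  unfolding fg_quotient_def
proof (intro exI[of _ "g ` Y"] conjI ballI)
  show "finite (g ` Y)" "g ` Y \<subseteq> L" using assms by auto
  fix x assume "x \<in> L"
  then obtain c where c: "x - (\<Sum>y\<in>Y. s (c y) (g y)) \<in> U" using assms by blast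
  have "(\<Sum>y\<in>Y. s (c y) (g y)) = (\<Sum>f\<in>g ` Y. \<Sum>y\<in>{y\<in>Y. g y = f}. s (c y) (g y))"
    using sum.image_gen[OF assms(2)] by blast
  also have "\<dots> = (\<Sum>f\<in>g ` Y. s (\<Sum>y\<in>{y\<in>Y. g y = f}. c y) f)"
    by (intro sum.cong refl) (simp add: lmod_rsum[OF assms(1)])
  finally have eq: "(\<Sum>y\<in>Y. s (c y) (g y)) = (\<Sum>f\<in>g ` Y. s (\<Sum>y\<in>{y\<in>Y. g y = f}. c y) f)" .
  have "x - (\<Sum>f\<in>g ` Y. s (\<Sum>y\<in>{y\<in>Y. g y = f}. c y) f) \<in> U" using c unfolding eq .
  then show "\<exists>c. x - (\<Sum>f\<in>g ` Y. s (c f) f) \<in> U" by (rule exI[of _ "\<lambda>f. \<Sum>y\<in>{y\<in>Y. g y = f}. c y"])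
qed

locale tctx =
  fixes s :: "'r::ring_1 \<Rightarrow> 'm::ab_group_add \<Rightarrow> 'm"
    and \<tau> :: "'m topology"
    and sP :: "'r \<Rightarrow> 'p::ab_group_add \<Rightarrow> 'p"
    and sQ :: "'q::ab_group_add \<Rightarrow> 'r \<Rightarrow> 'q"
    and i :: "'m \<Rightarrow> 'p \<times> ('q \<Rightarrow> 'r)"
    and pr :: "'p \<times> ('q \<Rightarrow> 'r) \<Rightarrow> 'm"
  assumes tate: "tate_witness s \<tau> sP sQ i pr"
begin

lemma lmod_s: "lmod s" using tate unfolding tate_witness_def by blast
lemma top_UNIV: "topspace \<tau> = UNIV" using tate unfolding tate_witness_def by blast
lemma lmod_sP: "lmod sP" using tate unfolding tate_witness_def lprojective_def by blast
lemma rproj: "rprojective sQ" using tate unfolding tate_witness_def by blast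
lemma i_cont: "continuous_map \<tau> (PQ_top sQ) i" using tate unfolding tate_witness_def by blast
lemma pr_cont: "continuous_map (PQ_top sQ) \<tau> pr" using tate unfolding tate_witness_def by blast
lemma i_add: "i (x + y) = PQ_add (i x) (i y)" using tate unfolding tate_witness_def by blast
lemma i_scale: "i (s r x) = PQ_scale sP r (i x)" using tate unfolding tate_witness_def by blast
lemma pr_i [simp]: "pr (i x) = x" using tate unfolding tate_witness_def by blast

lemma top_PQ: "topspace (PQ_top sQ) = UNIV \<times> rdual sQ"
  by (simp add: PQ_top_def rdual_top_def topspace_subtopology topspace_product_topology)

lemma pr_add0: "\<forall>a\<in>topspace (PQ_top sQ). \<forall>b\<in>topspace (PQ_top sQ). pr (PQ_add a b) = pr a + pr b"
  using tate unfolding tate_witness_def by blast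
lemma pr_scale0: "\<forall>r. \<forall>a\<in>topspace (PQ_top sQ). pr (PQ_scale sP r a) = s r (pr a)"
  using tate unfolding tate_witness_def by blast
lemma pr_add: "a \<in> UNIV \<times> rdual sQ \<Longrightarrow> b \<in> UNIV \<times> rdual sQ \<Longrightarrow> pr (PQ_add a b) = pr a + pr b"
  using pr_add0 top_PQ by metis
lemma pr_scale: "a \<in> UNIV \<times> rdual sQ \<Longrightarrow> pr (PQ_scale sP r a) = s r (pr a)"
  using pr_scale0 top_PQ by metis

lemma i_rdual: "snd (i x) \<in> rdual sQ"
proof -
  have "i x \<in> UNIV \<times> rdual sQ" using i_cont unfolding continuous_map_def top_PQ top_UNIV by blast
  then show ?thesis by (simp add: mem_Times_iff)
qed

lemma fst_i_add [simp]: "fst (i (x + y)) = fst (i x) + fst (i y)"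
  by (simp add: i_add PQ_add_def)
lemma snd_i_add [simp]: "snd (i (x + y)) q = snd (i x) q + snd (i y) q"
  by (simp add: i_add PQ_add_def)
lemma fst_i_scale [simp]: "fst (i (s r x)) = sP r (fst (i x))"
  by (simp add: i_scale PQ_scale_def)
lemma snd_i_scale [simp]: "snd (i (s r x)) q = r * snd (i x) q"
  by (simp add: i_scale PQ_scale_def)
lemma fst_i_0 [simp]: "fst (i 0) = 0"
  by (rule additive_0[of "\<lambda>x. fst (i x)"]) simp
lemma snd_i_0 [simp]: "snd (i 0) q = 0"
  by (rule additive_0[of "\<lambda>x. snd (i x) q"]) simp
lemma fst_i_diff [simp]: "fst (i (x - y)) = fst (i x) - fst (i y)"
  by (rule additive_diff[of "\<lambda>x. fst (i x)"]) simp
lemma snd_i_diff [simp]: "snd (i (x - y)) q = snd (i x) q - snd (i y) q"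
  by (rule additive_diff[of "\<lambda>x. snd (i x) q"]) simp
lemma fst_i_sum: "fst (i (\<Sum>a\<in>A. f a)) = (\<Sum>a\<in>A. fst (i (f a)))"
  by (rule additive_sum[of "\<lambda>x. fst (i x)"]) simp
lemma snd_i_sum: "snd (i (\<Sum>a\<in>A. f a)) q = (\<Sum>a\<in>A. snd (i (f a)) q)"
  by (rule additive_sum[of "\<lambda>x. snd (i x) q"]) simp

lemma i_eqI: "fst (i x) = fst (i y) \<Longrightarrow> (\<And>q. snd (i x) q = snd (i y) q) \<Longrightarrow> x = y"
  by (metis pr_i prod.expand ext)

definition agr :: "'q set \<Rightarrow> 'm \<Rightarrow> 'm \<Rightarrow> bool" where
  "agr F x y \<longleftrightarrow> fst (i y) = fst (i x) \<and> (\<forall>q\<in>F. snd (i y) q = snd (i x) q)"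

lemma pr_nbhd:
  assumes W: "openin \<tau> W" and z: "z \<in> UNIV \<times> rdual sQ" and pz: "pr z \<in> W"
  shows "\<exists>F. finite F \<and> (\<forall>z'\<in>UNIV \<times> rdual sQ. fst z' = fst z \<and> (\<forall>q\<in>F. snd z' q = snd z q) \<longrightarrow> pr z' \<in> W)"
proof -
  define A where "A = {x \<in> topspace (PQ_top sQ). pr x \<in> W}"
  have op: "openin (PQ_top sQ) A"
    unfolding A_def using openin_continuous_map_preimage[OF pr_cont W] .
  have zA: "(fst z, snd z) \<in> A" using z pz unfolding A_def top_PQ by simp
  have H: "\<forall>x y. (x, y) \<in> A \<longrightarrow> (\<exists>U V. openin (discrete_topology UNIV) U \<and> openin (rdual_top sQ) V \<and> x \<in> U \<and> y \<in> V \<and> U \<times> V \<subseteq> A)"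
    using op unfolding PQ_top_def openin_prod_topology_alt .
  obtain U V where UV: "openin (discrete_topology UNIV) U" "openin (rdual_top sQ) V"
    "fst z \<in> U" "snd z \<in> V" "U \<times> V \<subseteq> A"
    using H[rule_format, OF zA] by iprover
  obtain T where T: "openin (product_topology (\<lambda>_. discrete_topology (UNIV::'r set)) UNIV) T"
    "V = T \<inter> rdual sQ"
    using UV(2) unfolding rdual_top_def openin_subtopology by blast
  obtain U' where U': "finite {q \<in> UNIV. U' q \<noteq> topspace (discrete_topology (UNIV::'r set))}"
    "snd z \<in> Pi\<^sub>E UNIV U'" "Pi\<^sub>E UNIV U' \<subseteq> T"
    using T(1)[unfolded openin_product_topology_alt] UV(4) T(2) by blast
  show ?thesis
  proof (intro exI conjI ballI impI)
    show "finite {q. U' q \<noteq> UNIV}" using U'(1) by simp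
    fix z' :: "'p \<times> ('q \<Rightarrow> 'r)"
    assume z': "z' \<in> UNIV \<times> rdual sQ" and ag: "fst z' = fst z \<and> (\<forall>q\<in>{q. U' q \<noteq> UNIV}. snd z' q = snd z q)"
    have "snd z' \<in> Pi\<^sub>E UNIV U'"
    proof -
      have "snd z' q \<in> U' q" for q
        using ag U'(2) by (cases "U' q = UNIV") (auto simp: PiE_iff)
      then show ?thesis by (auto simp: PiE_iff)
    qed
    then have "snd z' \<in> V" using U'(3) T(2) z' by auto
    moreover have "fst z' \<in> U" using ag UV(3) by simp
    ultimately have "z' \<in> U \<times> V" by (simp add: mem_Times_iff)
    then show "pr z' \<in> W" using UV(5) unfolding A_def by auto
  qed
qed

lemma basic_open:
  assumes "finite F"
  shows "openin \<tau> {y. agr F x y}"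
proof -
  let ?B = "{h :: 'q \<Rightarrow> 'r. \<forall>q\<in>F. h q = snd (i x) q}"
  have B: "openin (product_topology (\<lambda>_. discrete_topology (UNIV::'r set)) UNIV) ?B"
    unfolding openin_product_topology_alt
  proof (intro ballI exI[of _ "\<lambda>q. if q \<in> F then {snd (i x) q} else UNIV"] conjI)
    show "finite {q \<in> UNIV. (if q \<in> F then {snd (i x) q} else UNIV) \<noteq> topspace (discrete_topology UNIV)}"
      by (rule finite_subset[OF _ assms]) auto
  next
    fix h assume "h \<in> ?B"
    then show "h \<in> Pi\<^sub>E UNIV (\<lambda>q. if q \<in> F then {snd (i x) q} else UNIV)"
      by (auto simp: PiE_iff)
  next
    fix h assume "h \<in> ?B"
    show "Pi\<^sub>E UNIV (\<lambda>q. if q \<in> F then {snd (i x) q} else UNIV) \<subseteq> ?B"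
    proof
      fix k assume k: "k \<in> Pi\<^sub>E UNIV (\<lambda>q. if q \<in> F then {snd (i x) q} else UNIV)"
      have "k q = snd (i x) q" if "q \<in> F" for q
      proof -
        have "k q \<in> (if q \<in> F then {snd (i x) q} else UNIV)" using k unfolding PiE_iff by blast
        with that show ?thesis by simp
      qed
      then show "k \<in> ?B" by blast
    qed
  qed auto
  have "openin (PQ_top sQ) ({fst (i x)} \<times> (rdual sQ \<inter> ?B))"
    unfolding PQ_top_def openin_prod_Times_iff rdual_top_def
    using openin_subtopology_Int2[OF B] by auto
  from openin_continuous_map_preimage[OF i_cont this]
  have "openin \<tau> {y \<in> topspace \<tau>. i y \<in> {fst (i x)} \<times> (rdual sQ \<inter> ?B)}" .
  moreover have "{y \<in> topspace \<tau>. i y \<in> {fst (i x)} \<times> (rdual sQ \<inter> ?B)} = {y. agr F x y}"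
    using i_rdual by (auto simp: agr_def top_UNIV mem_Times_iff)
  ultimately show ?thesis by simp
qed

lemma agr_refl [simp]: "agr F x x" by (simp add: agr_def)

lemma open_iff: "openin \<tau> W \<longleftrightarrow> (\<forall>x\<in>W. \<exists>F. finite F \<and> (\<forall>y. agr F x y \<longrightarrow> y \<in> W))"
proof
  assume W: "openin \<tau> W"
  show "\<forall>x\<in>W. \<exists>F. finite F \<and> (\<forall>y. agr F x y \<longrightarrow> y \<in> W)"
  proof
    fix x assume "x \<in> W"
    then obtain F where F: "finite F" "\<forall>z'\<in>UNIV \<times> rdual sQ. fst z' = fst (i x) \<and> (\<forall>q\<in>F. snd z' q = snd (i x) q) \<longrightarrow> pr z' \<in> W"
      using pr_nbhd[OF W, of "i x"] i_rdual by (auto simp: mem_Times_iff)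
    show "\<exists>F. finite F \<and> (\<forall>y. agr F x y \<longrightarrow> y \<in> W)"
    proof (intro exI[of _ F] conjI allI impI)
      fix y assume "agr F x y"
      have "i y \<in> UNIV \<times> rdual sQ" using i_rdual by (simp add: mem_Times_iff)
      then have "pr (i y) \<in> W"
        by (rule mp[OF bspec[OF F(2)]]) (use \<open>agr F x y\<close> in \<open>simp add: agr_def\<close>)
      then show "y \<in> W" by simp
    qed (rule F(1))
  qed
next
  assume h: "\<forall>x\<in>W. \<exists>F. finite F \<and> (\<forall>y. agr F x y \<longrightarrow> y \<in> W)"
  show "openin \<tau> W"
  proof (subst openin_subopen, intro ballI)
    fix x assume "x \<in> W"
    then obtain F where "finite F" "\<forall>y. agr F x y \<longrightarrow> y \<in> W" using h by blast
    then show "\<exists>T. openin \<tau> T \<and> x \<in> T \<and> T \<subseteq> W"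
      using basic_open by (intro exI[of _ "{y. agr F x y}"]) auto
  qed
qed

lemma cont_crit:
  assumes "\<And>x F. finite F \<Longrightarrow> \<exists>G. finite G \<and> (\<forall>y. agr G x y \<longrightarrow> agr F (g x) (g y))"
  shows "continuous_map \<tau> \<tau> g"
  unfolding continuous_map_def top_UNIV
proof (intro conjI allI impI)
  fix W assume W: "openin \<tau> W"
  show "openin \<tau> {x \<in> UNIV. g x \<in> W}"
    unfolding open_iff
  proof (intro ballI)
    fix x assume "x \<in> {x \<in> UNIV. g x \<in> W}"
    then have "g x \<in> W" by simp
    then obtain F where F: "finite F" "\<forall>y. agr F (g x) y \<longrightarrow> y \<in> W"
      using W[unfolded open_iff] by blast
    obtain G where G: "finite G" "\<forall>y. agr G x y \<longrightarrow> agr F (g x) (g y)" using assms[OF F(1)] by blast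
    show "\<exists>F. finite F \<and> (\<forall>y. agr F x y \<longrightarrow> y \<in> {x \<in> UNIV. g x \<in> W})"
      using F G by (intro exI[of _ G]) blast
  qed
qed auto

lemma scale_cont: "continuous_map \<tau> \<tau> (s c)"
  by (rule cont_crit, rule_tac x=F in exI) (auto simp: agr_def)

lemma transl_cont: "continuous_map \<tau> \<tau> (\<lambda>y. y + a)"
  by (rule cont_crit, rule_tac x=F in exI) (auto simp: agr_def)

lemma transl_open: "openin \<tau> V \<Longrightarrow> openin \<tau> {y. y - a \<in> V}"
  using openin_continuous_map_preimage[OF transl_cont[of "-a"], of V] by (simp add: top_UNIV)

lemma add_cont: "continuous_map (prod_topology \<tau> \<tau>) \<tau> (\<lambda>(x, y). x + y)"
  unfolding continuous_map_def
proof (intro conjI allI impI)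
  fix W assume W: "openin \<tau> W"
  show "openin (prod_topology \<tau> \<tau>) {x \<in> topspace (prod_topology \<tau> \<tau>). (case x of (x, y) \<Rightarrow> x + y) \<in> W}"
  proof (subst openin_subopen, intro ballI)
    fix z assume z: "z \<in> {x \<in> topspace (prod_topology \<tau> \<tau>). (case x of (x, y) \<Rightarrow> x + y) \<in> W}"
    obtain a b where zab: "z = (a, b)" by fastforce
    have "a + b \<in> W" using z zab by simp
    then obtain F where F: "finite F" "\<forall>y. agr F (a + b) y \<longrightarrow> y \<in> W"
      using W[unfolded open_iff] by blast
    show "\<exists>T. openin (prod_topology \<tau> \<tau>) T \<and> z \<in> T \<and> T \<subseteq> {x \<in> topspace (prod_topology \<tau> \<tau>). (case x of (x, y) \<Rightarrow> x + y) \<in> W}"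
    proof (intro exI[of _ "{y. agr F a y} \<times> {y. agr F b y}"] conjI)
      show "openin (prod_topology \<tau> \<tau>) ({y. agr F a y} \<times> {y. agr F b y})"
        using basic_open[OF F(1)] by (simp add: openin_prod_Times_iff)
      show "z \<in> {y. agr F a y} \<times> {y. agr F b y}" using zab by simp
      show "{y. agr F a y} \<times> {y. agr F b y} \<subseteq> {x \<in> topspace (prod_topology \<tau> \<tau>). (case x of (x, y) \<Rightarrow> x + y) \<in> W}"
        using F(2) by (auto simp: agr_def top_UNIV)
    qed
  qed
qed (simp add: top_UNIV)

lemma Hausdorff: "Hausdorff_space \<tau>"
proof (rule Hausdorff_space_injective_preimage[OF _ i_cont])
  have "Hausdorff_space (product_topology (\<lambda>_. discrete_topology (UNIV::'r set)) (UNIV::'q set))"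
    by (simp add: Hausdorff_space_product_topology Hausdorff_space_discrete_topology)
  then have "Hausdorff_space (rdual_top sQ)"
    unfolding rdual_top_def by (rule Hausdorff_space_subtopology)
  then show "Hausdorff_space (PQ_top sQ)"
    unfolding PQ_top_def by (simp add: Hausdorff_space_prod_topology Hausdorff_space_discrete_topology)
  show "inj_on i (topspace \<tau>)" by (metis inj_on_inverseI pr_i)
qed

lemma lim_discrete: "eventually (\<lambda>n. a n = l) F \<Longrightarrow> limitin (discrete_topology UNIV) a l F"
  unfolding limitin_def by (auto elim: eventually_mono)

lemma PQ_lim:
  assumes "l \<in> UNIV \<times> rdual sQ" "\<And>N. a N \<in> UNIV \<times> rdual sQ"
    "eventually (\<lambda>N. fst (a N) = fst l) F" "\<And>q. eventually (\<lambda>N. snd (a N) q = snd l q) F"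
  shows "limitin (PQ_top sQ) a l F"
  unfolding PQ_top_def limitin_pairwise rdual_top_def
proof (intro conjI)
  show "limitin (discrete_topology UNIV) (fst \<circ> a) (fst l) F"
    using assms(3) by (intro lim_discrete) (simp add: o_def)
  show "limitin (subtopology (product_topology (\<lambda>_. discrete_topology UNIV) UNIV) (rdual sQ)) (snd \<circ> a) (snd l) F"
    unfolding limitin_subtopology limitin_componentwise
    using assms by (auto intro!: lim_discrete simp: mem_Times_iff)
qed

lemma S_limit:
  assumes "l \<in> UNIV \<times> rdual sQ"
    "eventually (\<lambda>N. fst (i (a N)) = fst l) F" "\<And>q. eventually (\<lambda>N. snd (i (a N)) q = snd l q) F"
  shows "limitin \<tau> a (pr l) F"
proof -
  have "limitin (PQ_top sQ) (\<lambda>N. i (a N)) l F"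
    using assms i_rdual by (intro PQ_lim) (auto simp: mem_Times_iff)
  from continuous_map_limit[OF pr_cont this] show ?thesis by (simp add: o_def)
qed

end

context tctx
begin

definition sig :: "'q \<Rightarrow> 'q \<Rightarrow> 'r" where
  "sig = (SOME \<sigma>. (\<forall>x. finite {y. \<sigma> x y \<noteq> 0}) \<and>
      (\<forall>x y. \<sigma> (x + y) = (\<lambda>z. \<sigma> x z + \<sigma> y z)) \<and>
      (\<forall>r x. \<sigma> (sQ x r) = (\<lambda>z. \<sigma> x z * r)) \<and>
      (\<forall>x. (\<Sum>y\<in>{y. \<sigma> x y \<noteq> 0}. sQ y (\<sigma> x y)) = x))"

lemma sig_props: "(\<forall>x. finite {y. sig x y \<noteq> 0}) \<and>
      (\<forall>x y. sig (x + y) = (\<lambda>z. sig x z + sig y z)) \<and>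
      (\<forall>r x. sig (sQ x r) = (\<lambda>z. sig x z * r)) \<and>
      (\<forall>x. (\<Sum>y\<in>{y. sig x y \<noteq> 0}. sQ y (sig x y)) = x)"
proof -
  have "\<exists>\<sigma> :: 'q \<Rightarrow> 'q \<Rightarrow> 'r. (\<forall>x. finite {y. \<sigma> x y \<noteq> 0}) \<and>
      (\<forall>x y. \<sigma> (x + y) = (\<lambda>z. \<sigma> x z + \<sigma> y z)) \<and>
      (\<forall>r x. \<sigma> (sQ x r) = (\<lambda>z. \<sigma> x z * r)) \<and>
      (\<forall>x. (\<Sum>y\<in>{y. \<sigma> x y \<noteq> 0}. sQ y (\<sigma> x y)) = x)"
    using rproj unfolding rprojective_def by blast
  then show ?thesis unfolding sig_def by (rule someI_ex)
qed

definition supp :: "'q \<Rightarrow> 'q set" where "supp q = {y. sig q y \<noteq> 0}"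

lemma supp_finite [simp]: "finite (supp q)" using sig_props unfolding supp_def by blast
lemma sig_add: "sig (x + y) z = sig x z + sig y z" using sig_props by metis
lemma sig_scale: "sig (sQ x r) z = sig x z * r" using sig_props by metis
lemma sig_rep: "(\<Sum>y\<in>supp x. sQ y (sig x y)) = x" using sig_props unfolding supp_def by blast
lemma notin_supp: "y \<notin> supp q \<Longrightarrow> sig q y = 0" unfolding supp_def by simp

definition E :: "('q \<Rightarrow> 'r) \<Rightarrow> 'q \<Rightarrow> 'r" where
  "E h q = (\<Sum>y\<in>supp q. h y * sig q y)"

lemma E_sup: "finite Z \<Longrightarrow> supp q \<subseteq> Z \<Longrightarrow> E h q = (\<Sum>y\<in>Z. h y * sig q y)"
  unfolding E_def by (rule sum.mono_neutral_left) (auto simp: notin_supp)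

lemma E_rdual: "E h \<in> rdual sQ"
  unfolding rdual_def
proof (intro CollectI conjI allI)
  fix x y
  let ?Z = "supp x \<union> supp y \<union> supp (x + y)"
  have "E h (x + y) = (\<Sum>z\<in>?Z. h z * sig (x + y) z)" by (rule E_sup) auto
  also have "\<dots> = (\<Sum>z\<in>?Z. h z * sig x z) + (\<Sum>z\<in>?Z. h z * sig y z)"
    by (simp add: sig_add distrib_left sum.distrib)
  also have "\<dots> = E h x + E h y"
  proof -
    have e1: "E h x = (\<Sum>z\<in>?Z. h z * sig x z)" by (rule E_sup) auto
    have e2: "E h y = (\<Sum>z\<in>?Z. h z * sig y z)" by (rule E_sup) auto
    show ?thesis by (simp add: e1 e2)
  qed
  finally show "E h (x + y) = E h x + E h y" .
next
  fix x r
  have "supp (sQ x r) \<subseteq> supp x" unfolding supp_def by (auto simp: sig_scale)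
  then have "E h (sQ x r) = (\<Sum>z\<in>supp x. h z * sig (sQ x r) z)" by (intro E_sup) auto
  also have "\<dots> = (\<Sum>z\<in>supp x. h z * sig x z) * r"
    by (simp add: sig_scale sum_distrib_right mult.assoc)
  finally show "E h (sQ x r) = E h x * r" by (simp add: E_def)
qed

lemma E_vanish: "(\<And>y. y \<in> supp q \<Longrightarrow> h y = 0) \<Longrightarrow> E h q = 0"
  unfolding E_def by simp

lemma rdual_add: "g \<in> rdual sQ \<Longrightarrow> g (x + y) = g x + g y"
  unfolding rdual_def by blast
lemma rdual_scale: "g \<in> rdual sQ \<Longrightarrow> g (sQ x r) = g x * r"
  unfolding rdual_def by blast

lemma E_self: "g \<in> rdual sQ \<Longrightarrow> E g = g"
proof (rule ext)
  fix q assume g: "g \<in> rdual sQ"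
  have "g q = g (\<Sum>y\<in>supp q. sQ y (sig q y))" by (simp add: sig_rep)
  also have "\<dots> = (\<Sum>y\<in>supp q. g (sQ y (sig q y)))"
    by (rule additive_sum) (rule rdual_add[OF g])
  also have "\<dots> = E g q" unfolding E_def by (simp add: rdual_scale[OF g])
  finally show "E g q = g q" by simp
qed

lemma E_add: "E (\<lambda>y. h1 y + h2 y) q = E h1 q + E h2 q"
  unfolding E_def by (simp add: distrib_right sum.distrib)
lemma E_scale: "E (\<lambda>y. r * h y) q = r * E h q"
  unfolding E_def by (simp add: sum_distrib_left mult.assoc)
lemma E_zero: "E (\<lambda>y. 0) = (\<lambda>q. 0)"
  unfolding E_def by (simp add: fun_eq_iff)
lemma E_delta: "E (\<lambda>z. if z = y then 1 else 0) q = sig q y"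
proof -
  have "E (\<lambda>z. if z = y then 1 else 0) q = (\<Sum>z\<in>supp q. if z = y then sig q z else 0)"
    unfolding E_def by (intro sum.cong) auto
  also have "\<dots> = (if y \<in> supp q then sig q y else 0)" by (simp add: sum.delta)
  also have "\<dots> = sig q y" by (auto simp: notin_supp)
  finally show ?thesis .
qed

lemma i_zero: "i 0 = (0, \<lambda>q. 0)"
  by (rule prod_eqI) (auto simp: fun_eq_iff)

lemma pr_zero: "pr (0, \<lambda>q. 0) = 0"
  using pr_i[of 0] by (simp add: i_zero)

lemma E_mem: "(0, E h) \<in> UNIV \<times> rdual sQ"
  using E_rdual by (simp add: mem_Times_iff)

lemma pr0_add: "pr (0, E h1) + pr (0, E h2) = pr (0, E (\<lambda>y. h1 y + h2 y))"
proof -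
  have "pr (0, E h1) + pr (0, E h2) = pr (PQ_add (0, E h1) (0, E h2))"
    by (rule pr_add[OF E_mem E_mem, symmetric])
  also have "PQ_add (0, E h1) (0, E h2) = (0, E (\<lambda>y. h1 y + h2 y))"
    by (simp add: PQ_add_def E_add fun_eq_iff)
  finally show ?thesis .
qed

lemma pr0_scale: "s r (pr (0, E h)) = pr (0, E (\<lambda>y. r * h y))"
proof -
  have "s r (pr (0, E h)) = pr (PQ_scale sP r (0, E h))"
    by (rule pr_scale[OF E_mem, symmetric])
  also have "PQ_scale sP r (0, E h) = (0, E (\<lambda>y. r * h y))"
    by (simp add: PQ_scale_def E_scale fun_eq_iff lmod_zero[OF lmod_sP])
  finally show ?thesis .
qed

lemma pr0_zero: "pr (0, E (\<lambda>y. 0)) = 0"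
  by (simp add: E_zero pr_zero)

lemma pr0_diff: "pr (0, E h1) - pr (0, E h2) = pr (0, E (\<lambda>y. h1 y - h2 y))"
proof -
  have "pr (0, E (\<lambda>y. h1 y - h2 y)) + pr (0, E h2) = pr (0, E (\<lambda>y. (h1 y - h2 y) + h2 y))"
    by (rule pr0_add)
  then have "pr (0, E (\<lambda>y. h1 y - h2 y)) + pr (0, E h2) = pr (0, E h1)" by simp
  then show ?thesis by (metis add_diff_cancel)
qed

lemma pr0_sum:
  assumes "finite Y"
  shows "(\<Sum>y\<in>Y. s (h y) (pr (0, E (\<lambda>z. if z = y then 1 else 0)))) = pr (0, E (\<lambda>z. if z \<in> Y then h z else 0))"
  using assms
proof (induction Y rule: finite_induct)
  case empty
  then show ?case using pr0_zero by simp
next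
  case (insert y Y)
  have "(\<Sum>y\<in>insert y Y. s (h y) (pr (0, E (\<lambda>z. if z = y then 1 else 0))))
      = s (h y) (pr (0, E (\<lambda>z. if z = y then 1 else 0))) + pr (0, E (\<lambda>z. if z \<in> Y then h z else 0))"
    using insert by simp
  also have "\<dots> = pr (0, E (\<lambda>z. h y * (if z = y then 1 else 0))) + pr (0, E (\<lambda>z. if z \<in> Y then h z else 0))"
    by (simp add: pr0_scale)
  also have "\<dots> = pr (0, E (\<lambda>z. h y * (if z = y then 1 else 0) + (if z \<in> Y then h z else 0)))"
    by (rule pr0_add)
  also have "(\<lambda>z. h y * (if z = y then 1 else 0) + (if z \<in> Y then h z else 0)) = (\<lambda>z. if z \<in> insert y Y then h z else 0)"
    using insert(2) by (auto simp: fun_eq_iff)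
  finally show ?case .
qed

lemma zero_rdual: "(\<lambda>q. 0) \<in> rdual sQ" by (simp add: rdual_def)

lemma pr_nbhd0:
  assumes W: "openin \<tau> W" "0 \<in> W"
  shows "\<exists>F. finite F \<and> (\<forall>g\<in>rdual sQ. (\<forall>q\<in>F. g q = 0) \<longrightarrow> pr (0, g) \<in> W)"
proof -
  have z0: "(0, \<lambda>q. 0) \<in> UNIV \<times> rdual sQ" using zero_rdual by (simp add: mem_Times_iff)
  have "pr (0, \<lambda>q. 0) \<in> W" using W(2) pr_zero by simp
  from pr_nbhd[OF W(1) z0 this] obtain F where F: "finite F"
    "\<forall>z'\<in>UNIV \<times> rdual sQ. fst z' = fst (0::'p, \<lambda>q::'q. 0::'r) \<and> (\<forall>q\<in>F. snd z' q = snd (0::'p, \<lambda>q::'q. 0::'r) q) \<longrightarrow> pr z' \<in> W"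
    by blast
  show ?thesis
  proof (intro exI[of _ F] conjI ballI impI)
    fix g assume g: "g \<in> rdual sQ" "\<forall>q\<in>F. g q = 0"
    have "(0, g) \<in> UNIV \<times> rdual sQ" using g(1) by (simp add: mem_Times_iff)
    from bspec[OF F(2) this] show "pr (0, g) \<in> W" using g(2) by simp
  qed (rule F(1))
qed

definition Lat :: "'q set \<Rightarrow> 'm set" where
  "Lat B = {pr (0, E h) | h. \<forall>y\<in>B. h y = 0}"

lemma Lat_submod: "lsubmod s (Lat B)"
  unfolding lsubmod_def
proof (intro conjI ballI allI)
  show "0 \<in> Lat B" unfolding Lat_def using pr0_zero by force
next
  fix x y assume "x \<in> Lat B" "y \<in> Lat B"
  then obtain h1 h2 where h: "x = pr (0, E h1)" "\<forall>y\<in>B. h1 y = 0" "y = pr (0, E h2)" "\<forall>y\<in>B. h2 y = 0"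
    unfolding Lat_def by blast
  have "x + y = pr (0, E (\<lambda>z. h1 z + h2 z))" using h pr0_add by simp
  then show "x + y \<in> Lat B" unfolding Lat_def using h by (intro CollectI exI[of _ "\<lambda>z. h1 z + h2 z"]) simp
next
  fix r x assume "x \<in> Lat B"
  then obtain h where h: "x = pr (0, E h)" "\<forall>y\<in>B. h y = 0" unfolding Lat_def by blast
  have "s r x = pr (0, E (\<lambda>z. r * h z))" using h pr0_scale by simp
  then show "s r x \<in> Lat B" unfolding Lat_def using h by (intro CollectI exI[of _ "\<lambda>z. r * h z"]) simp
qed

lemma Lat_small:
  assumes W: "openin \<tau> W" "0 \<in> W"
  shows "\<exists>B. finite B \<and> Lat B \<subseteq> W"
proof -
  obtain F where F: "finite F" "\<forall>g\<in>rdual sQ. (\<forall>q\<in>F. g q = 0) \<longrightarrow> pr (0, g) \<in> W"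
    using pr_nbhd0[OF W] by blast
  define B where "B = (\<Union>q\<in>F. supp q)"
  have "finite B" unfolding B_def using F(1) by simp
  moreover have "Lat B \<subseteq> W"
  proof
    fix x assume "x \<in> Lat B"
    then obtain h where h: "x = pr (0, E h)" "\<forall>y\<in>B. h y = 0" unfolding Lat_def by blast
    have "\<forall>q\<in>F. E h q = 0"
    proof
      fix q assume "q \<in> F"
      then have "supp q \<subseteq> B" unfolding B_def by blast
      then show "E h q = 0" using h(2) by (intro E_vanish) blast
    qed
    then show "x \<in> W" using bspec[OF F(2) E_rdual[of h]] h(1) by simp
  qed
  ultimately show ?thesis by blast
qed

lemma agr_diff: "agr F x y \<Longrightarrow> fst (i (y - x)) = 0 \<and> (\<forall>q\<in>F. snd (i (y - x)) q = 0)"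
  unfolding agr_def by simp

lemma i_as_pr0: "fst (i z) = 0 \<Longrightarrow> z = pr (0, E (snd (i z)))"
proof -
  assume "fst (i z) = 0"
  then have "i z = (0, snd (i z))" by (simp add: prod_eq_iff)
  then have "z = pr (0, snd (i z))" by (metis pr_i)
  then show ?thesis by (simp add: E_self[OF i_rdual])
qed

lemma Lat_open: "openin \<tau> (Lat B)" if "finite B"
  unfolding open_iff
proof (intro ballI exI[of _ B] conjI allI impI)
  show "finite B" by fact
  fix x y assume x: "x \<in> Lat B" and ag: "agr B x y"
  have d: "fst (i (y - x)) = 0" "\<forall>q\<in>B. snd (i (y - x)) q = 0" using agr_diff[OF ag] by auto
  have "y - x \<in> Lat B"
    unfolding Lat_def using i_as_pr0[OF d(1)] d(2) by blast
  then have "(y - x) + x \<in> Lat B" using x Lat_submod unfolding lsubmod_def by blast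
  then show "y \<in> Lat B" by simp
qed

lemma Lat_fg:
  assumes B: "finite B" and U: "openin \<tau> U" "lsubmod s U" "U \<subseteq> Lat B"
  shows "fg_quotient s (Lat B) U"
proof -
  have "0 \<in> U" using U(2) unfolding lsubmod_def by blast
  then obtain F where F: "finite F" "\<forall>g\<in>rdual sQ. (\<forall>q\<in>F. g q = 0) \<longrightarrow> pr (0, g) \<in> U"
    using pr_nbhd0[OF U(1)] by blast
  define B' where "B' = B \<union> (\<Union>q\<in>F. supp q)"
  define Y where "Y = B' - B"
  define gen where "gen y = pr (0, E (\<lambda>z. if z = y then 1 else 0))" for y
  have finY: "finite Y" unfolding Y_def B'_def using F(1) B by simp
  show ?thesis
  proof (rule fg_index[OF lmod_s finY])
    show "gen ` Y \<subseteq> Lat B"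
      unfolding gen_def Lat_def Y_def by force
  next
    fix x assume "x \<in> Lat B"
    then obtain h where h: "x = pr (0, E h)" "\<forall>y\<in>B. h y = 0" unfolding Lat_def by blast
    define h' where "h' z = h z - (if z \<in> Y then h z else 0)" for z
    have "x - (\<Sum>y\<in>Y. s (h y) (gen y)) = pr (0, E h')"
      unfolding h(1) gen_def pr0_sum[OF finY] pr0_diff h'_def ..
    moreover have "pr (0, E h') \<in> U"
    proof -
      have "\<forall>q\<in>F. E h' q = 0"
      proof
        fix q assume "q \<in> F"
        then have "supp q \<subseteq> B'" unfolding B'_def by blast
        moreover have "\<forall>z\<in>B'. h' z = 0" using h(2) unfolding h'_def Y_def by auto
        ultimately show "E h' q = 0" by (intro E_vanish) blast
      qed
      then show ?thesis using bspec[OF F(2) E_rdual[of h']] by simp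
    qed
    ultimately show "\<exists>c. x - (\<Sum>y\<in>Y. s (c y) (gen y)) \<in> U" by metis
  qed
qed

lemma Lat_lattice: "finite B \<Longrightarrow> lattice s \<tau> (Lat B)"
  unfolding lattice_def using Lat_open Lat_submod Lat_fg by blast

lemma lattice_plus:
  assumes L: "lattice s \<tau> L"
  shows "lattice s \<tau> {l + s r x | l r. l \<in> L}"
proof -
  let ?L1 = "{l + s r x | l r. l \<in> L}"
  have Lo: "openin \<tau> L" and Ls: "lsubmod s L"
    and Lf: "\<And>U. openin \<tau> U \<Longrightarrow> lsubmod s U \<Longrightarrow> U \<subseteq> L \<Longrightarrow> fg_quotient s L U"
    using L unfolding lattice_def by auto
  have L0: "0 \<in> L" using Ls unfolding lsubmod_def by blast
  have sub: "lsubmod s ?L1"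
    unfolding lsubmod_def
  proof (intro conjI ballI allI)
    show "0 \<in> ?L1" using L0 by (intro CollectI exI[of _ 0] exI[of _ 0]) (simp add: lmod_rzero[OF lmod_s])
  next
    fix a b assume "a \<in> ?L1" "b \<in> ?L1"
    then obtain l1 r1 l2 r2 where "a = l1 + s r1 x" "l1 \<in> L" "b = l2 + s r2 x" "l2 \<in> L" by blast
    moreover have "l1 + l2 \<in> L" using Ls \<open>l1 \<in> L\<close> \<open>l2 \<in> L\<close> unfolding lsubmod_def by blast
    ultimately show "a + b \<in> ?L1"
      by (intro CollectI exI[of _ "l1 + l2"] exI[of _ "r1 + r2"]) (simp add: lmod_radd[OF lmod_s] algebra_simps)
  next
    fix c a assume "a \<in> ?L1"
    then obtain l r where "a = l + s r x" "l \<in> L" by blast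
    moreover have "s c l \<in> L" using Ls \<open>l \<in> L\<close> unfolding lsubmod_def by blast
    ultimately show "s c a \<in> ?L1"
      by (intro CollectI exI[of _ "s c l"] exI[of _ "c * r"]) (simp add: lmod_add[OF lmod_s] lmod_mult[OF lmod_s])
  qed
  have op: "openin \<tau> ?L1"
  proof (subst openin_subopen, intro ballI)
    fix z assume z: "z \<in> ?L1"
    show "\<exists>T. openin \<tau> T \<and> z \<in> T \<and> T \<subseteq> ?L1"
    proof (intro exI[of _ "{y. y - z \<in> L}"] conjI)
      show "openin \<tau> {y. y - z \<in> L}" by (rule transl_open[OF Lo])
      show "z \<in> {y. y - z \<in> L}" using L0 by simp
      show "{y. y - z \<in> L} \<subseteq> ?L1"
      proof
        fix y assume "y \<in> {y. y - z \<in> L}"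
        then have "y - z \<in> L" by simp
        moreover have "z \<in> L \<or> z \<in> ?L1" using z by blast
        then obtain l r where "z = l + s r x" "l \<in> L" using z by blast
        ultimately have "(y - z) + l \<in> L" using Ls unfolding lsubmod_def by blast
        moreover have "y = ((y - z) + l) + s r x" using \<open>z = l + s r x\<close> by simp
        ultimately show "y \<in> ?L1" by blast
      qed
    qed
  qed
  have fg: "fg_quotient s ?L1 U" if U: "openin \<tau> U" "lsubmod s U" "U \<subseteq> ?L1" for U
  proof -
    have "openin \<tau> (U \<inter> L)" using U(1) Lo by (rule openin_Int)
    moreover have "lsubmod s (U \<inter> L)" using U(2) Ls unfolding lsubmod_def by blast
    ultimately have "fg_quotient s L (U \<inter> L)" using Lf by blast
    then obtain F where F: "finite F" "F \<subseteq> L" "\<forall>l\<in>L. \<exists>c. l - (\<Sum>f\<in>F. s (c f) f) \<in> U \<inter> L"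
      unfolding fg_quotient_def by blast
    define gen where "gen = (\<lambda>w. case w of None \<Rightarrow> x | Some f \<Rightarrow> f)"
    let ?Y = "insert None (Some ` F)"
    show ?thesis
    proof (rule fg_index[OF lmod_s])
      show "finite ?Y" using F(1) by simp
      show "gen ` ?Y \<subseteq> ?L1"
      proof
        fix w assume "w \<in> gen ` ?Y"
        then consider "w = x" | f where "f \<in> F" "w = f" unfolding gen_def by auto
        then show "w \<in> ?L1"
        proof cases
          case 1
          then show ?thesis using L0
            by (intro CollectI exI[of _ 0] exI[of _ 1]) (simp add: lmod_one[OF lmod_s])
        next
          case 2
          then show ?thesis using F(2)
            by (intro CollectI exI[of _ f] exI[of _ 0]) (auto simp: lmod_rzero[OF lmod_s])
        qed
      qed
    next
      fix z assume "z \<in> ?L1"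
      then obtain l r where z: "z = l + s r x" "l \<in> L" by blast
      obtain c where c: "l - (\<Sum>f\<in>F. s (c f) f) \<in> U \<inter> L" using F(3) z(2) by blast
      define c' where "c' = (\<lambda>w. case w of None \<Rightarrow> r | Some f \<Rightarrow> c f)"
      have "(\<Sum>y\<in>?Y. s (c' y) (gen y)) = s (c' None) (gen None) + (\<Sum>y\<in>Some ` F. s (c' y) (gen y))"
        using F(1) by (subst sum.insert) auto
      also have "s (c' None) (gen None) = s r x" by (simp add: c'_def gen_def)
      also have "(\<Sum>y\<in>Some ` F. s (c' y) (gen y)) = (\<Sum>f\<in>F. s (c f) f)"
        by (simp add: sum.reindex c'_def gen_def)
      finally have "z - (\<Sum>y\<in>?Y. s (c' y) (gen y)) = l - (\<Sum>f\<in>F. s (c f) f)"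
        using z(1) by simp
      then show "\<exists>c. z - (\<Sum>y\<in>?Y. s (c y) (gen y)) \<in> U" using c by (intro exI[of _ c']) simp
    qed
  qed
  show ?thesis unfolding lattice_def using op sub fg by blast
qed

end

locale tctxT = tctx s \<tau> sP sQ i pr
  for s :: "'r::ring_1 \<Rightarrow> 'm::ab_group_add \<Rightarrow> 'm" and \<tau> :: "'m topology"
    and sP :: "'r \<Rightarrow> 'p::ab_group_add \<Rightarrow> 'p" and sQ :: "'q::ab_group_add \<Rightarrow> 'r \<Rightarrow> 'q"
    and i :: "'m \<Rightarrow> 'p \<times> ('q \<Rightarrow> 'r)" and pr :: "'p \<times> ('q \<Rightarrow> 'r) \<Rightarrow> 'm" +
  fixes T :: "'m \<Rightarrow> 'm"
  assumes T_add: "\<And>x y. T (x + y) = T x + T y"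
    and T_lin: "\<And>r x. T (s r x) = s r (T x)"
    and T_cont: "continuous_map \<tau> \<tau> T"
begin

lemma Tn_add: "(T ^^ n) (x + y) = (T ^^ n) x + (T ^^ n) y"
  by (induction n) (auto simp: T_add)
lemma Tn_lin: "(T ^^ n) (s r x) = s r ((T ^^ n) x)"
  by (induction n) (auto simp: T_lin)
lemma Tn_0: "(T ^^ n) 0 = 0"
  by (rule additive_0[of "T ^^ n"]) (rule Tn_add)
lemma Tn_diff: "(T ^^ n) (x - y) = (T ^^ n) x - (T ^^ n) y"
  by (rule additive_diff[of "T ^^ n"]) (rule Tn_add)
lemma Tn_sum: "(T ^^ n) (\<Sum>a\<in>A. f a) = (\<Sum>a\<in>A. (T ^^ n) (f a))"
  by (rule additive_sum[of "T ^^ n"]) (rule Tn_add)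
lemma Tn_cont: "continuous_map \<tau> \<tau> (T ^^ n)"
proof (induction n)
  case 0
  then show ?case by (simp add: top_UNIV)
next
  case (Suc n)
  have "T ^^ Suc n = T \<circ> (T ^^ n)" by (simp add: funpow.simps(2))
  then show ?case using continuous_map_compose[OF Suc T_cont] by metis
qed

lemma Tn_preimage_open: "openin \<tau> W \<Longrightarrow> openin \<tau> {v. (T ^^ n) v \<in> W}"
  using openin_continuous_map_preimage[OF Tn_cont[of n]] by (simp add: top_UNIV)

end

section \<open>fps metric helpers\<close>

lemma dist_fps_coeff:
  fixes a b :: "'a::group_add fps"
  assumes "dist a b < inverse (2 ^ k)" "n \<le> k"
  shows "fps_nth a n = fps_nth b n"
proof (cases "a = b")
  case False
  then have "dist a b = inverse (2 ^ subdegree (a - b))" by (simp add: dist_fps_def)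
  with assms(1) have "inverse ((2::real) ^ subdegree (a - b)) < inverse (2 ^ k)" by simp
  then have "(2::real) ^ k < 2 ^ subdegree (a - b)"
    by (simp add: inverse_less_iff_less)
  then have "k < subdegree (a - b)" by (simp add: power_strict_increasing_iff)
  then have "fps_nth (a - b) n = 0" using assms(2) by (intro nth_less_subdegree_zero) simp
  then show ?thesis by simp
qed simp

lemma dist_fps_le:
  fixes a b :: "'a::group_add fps"
  assumes "\<And>n. n < k \<Longrightarrow> fps_nth a n = fps_nth b n"
  shows "dist a b \<le> inverse (2 ^ k)"
proof (cases "a = b")
  case False
  then have "subdegree (a - b) \<ge> k" using assms by (intro subdegree_geI) auto
  then have "(2::real) ^ k \<le> 2 ^ subdegree (a - b)" by (simp add: power_increasing)
  then have "inverse ((2::real) ^ subdegree (a - b)) \<le> inverse (2 ^ k)"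
    by (simp add: le_imp_inverse_le)
  then show ?thesis using False by (simp add: dist_fps_def)
qed simp

lemma pow_small: "(e::real) > 0 \<Longrightarrow> \<exists>k. inverse (2 ^ k) < e"
proof -
  assume "e > 0"
  then obtain k where "(1 / 2) ^ k < e" using reals_power_lt_ex[of e 2] by auto
  then have "inverse ((2::real) ^ k) < e" by (simp add: power_one_over inverse_eq_divide)
  then show ?thesis by blast
qed

lemma inverse_pow_mono: "k \<le> n \<Longrightarrow> inverse ((2::real) ^ n) \<le> inverse (2 ^ k)"
  by (simp add: le_imp_inverse_le power_increasing)

lemma mult_right_cont: "continuous_map euclidean euclidean (\<lambda>f::'a::ring_1 fps. f * g)"
  unfolding continuous_map_iff_continuous2 continuous_on_iff
proof (intro ballI allI impI)
  fix f :: "'a fps" and e :: real assume "e > 0"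
  then obtain k where k: "inverse (2 ^ k) < e" using pow_small by blast
  show "\<exists>d>0. \<forall>f'\<in>UNIV. dist f' f < d \<longrightarrow> dist (f' * g) (f * g) < e"
  proof (intro exI[of _ "inverse (2 ^ k)"] conjI ballI impI)
    show "inverse (2 ^ k) > (0::real)" by simp
    fix f' :: "'a fps" assume "dist f' f < inverse (2 ^ k)"
    then have c: "\<And>n. n \<le> k \<Longrightarrow> fps_nth f' n = fps_nth f n" using dist_fps_coeff by blast
    have "fps_nth (f' * g) n = fps_nth (f * g) n" if "n < Suc k" for n
      unfolding fps_mult_nth using that c by (intro sum.cong) auto
    then have "dist (f' * g) (f * g) \<le> inverse (2 ^ Suc k)" by (rule dist_fps_le)
    also have "\<dots> \<le> inverse (2 ^ k)" by (rule inverse_pow_mono) simp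
    finally show "dist (f' * g) (f * g) < e" using k by simp
  qed
qed

lemma Xpow_tendsto: "(\<lambda>n. fps_X ^ n :: 'a::ring_1 fps) \<longlonglongrightarrow> 0"
  unfolding tendsto_iff
proof (intro allI impI)
  fix e :: real assume "e > 0"
  then obtain k where k: "inverse (2 ^ k) < e" using pow_small by blast
  have "dist (fps_X ^ n :: 'a fps) 0 < e" if "n \<ge> k" for n
  proof -
    have "dist (fps_X ^ n :: 'a fps) 0 \<le> inverse (2 ^ n)" by (rule dist_fps_le) simp
    also have "\<dots> \<le> inverse (2 ^ k)" using that by (rule inverse_pow_mono)
    finally show ?thesis using k by simp
  qed
  then show "\<forall>\<^sub>F n in sequentially. dist (fps_X ^ n :: 'a fps) 0 < e"
    unfolding eventually_sequentially by blast
qed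

section \<open>Eventual values\<close>

definition ev :: "(nat \<Rightarrow> 'a) \<Rightarrow> 'a" where
  "ev a = a (LEAST K. \<forall>n\<ge>K. a n = a K)"

lemma ev_const:
  assumes "\<forall>n\<ge>K. a n = c"
  shows "ev a = c"
proof -
  let ?K0 = "LEAST K. \<forall>n\<ge>K. a n = a K"
  have ex: "\<forall>n\<ge>K. a n = a K" using assms by simp
  then have K0: "\<forall>n\<ge>?K0. a n = a ?K0" by (rule LeastI)
  have "?K0 \<le> K" using ex by (rule Least_le)
  then have "a K = a ?K0" using K0 by blast
  moreover have "a K = c" using assms by blast
  ultimately show ?thesis unfolding ev_def by simp
qed

lemma cont_discrete:
  fixes g :: "'a \<Rightarrow> 'b"
  assumes "\<And>z. z \<in> topspace X \<Longrightarrow> \<exists>U. openin X U \<and> z \<in> U \<and> (\<forall>w\<in>U. g w = g z)"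
  shows "continuous_map X (discrete_topology UNIV) g"
  unfolding continuous_map_def
proof (intro conjI allI impI)
  fix S :: "'b set" assume "openin (discrete_topology UNIV) S"
  show "openin X {x \<in> topspace X. g x \<in> S}"
  proof (subst openin_subopen, intro ballI)
    fix z assume z: "z \<in> {x \<in> topspace X. g x \<in> S}"
    then obtain U where U: "openin X U" "z \<in> U" "\<forall>w\<in>U. g w = g z" using assms by blast
    have "U \<subseteq> topspace X" using U(1) by (rule openin_subset)
    then have "U \<subseteq> {x \<in> topspace X. g x \<in> S}" using U(3) z by auto
    then show "\<exists>T. openin X T \<and> z \<in> T \<and> T \<subseteq> {x \<in> topspace X. g x \<in> S}" using U by blast
  qed
qed auto

section \<open>Under hypothesis (i)\<close>

locale tctxH = tctxT s \<tau> sP sQ i pr T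
  for s :: "'r::ring_1 \<Rightarrow> 'm::ab_group_add \<Rightarrow> 'm" and \<tau> :: "'m topology"
    and sP :: "'r \<Rightarrow> 'p::ab_group_add \<Rightarrow> 'p" and sQ :: "'q::ab_group_add \<Rightarrow> 'r \<Rightarrow> 'q"
    and i :: "'m \<Rightarrow> 'p \<times> ('q \<Rightarrow> 'r)" and pr :: "'p \<times> ('q \<Rightarrow> 'r) \<Rightarrow> 'm" and T :: "'m \<Rightarrow> 'm" +
  assumes hyp: "\<forall>L L'. lattice s \<tau> L \<and> lattice s \<tau> L' \<longrightarrow> (\<exists>N::nat. \<forall>n>N. (T ^^ n) ` L' \<subseteq> L)"
begin

lemma conv_pt:
  assumes W: "openin \<tau> W" "0 \<in> W"
  shows "\<exists>K. \<forall>n\<ge>K. (T ^^ n) x \<in> W"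
proof -
  obtain B where B: "finite B" "Lat B \<subseteq> W" using Lat_small[OF W] by blast
  let ?L' = "{l + s r x | l r. l \<in> Lat {}}"
  have "lattice s \<tau> ?L'" by (rule lattice_plus[OF Lat_lattice]) simp
  moreover have "lattice s \<tau> (Lat B)" using B(1) by (rule Lat_lattice)
  ultimately obtain N where N: "\<forall>n>N. (T ^^ n) ` ?L' \<subseteq> Lat B" using hyp by blast
  have "0 \<in> Lat {}" using Lat_submod unfolding lsubmod_def by blast
  then have "x \<in> ?L'" by (intro CollectI exI[of _ 0] exI[of _ 1]) (simp add: lmod_one[OF lmod_s])
  have "(T ^^ n) x \<in> W" if "n \<ge> Suc N" for n
  proof -
    have "n > N" using that by simp
    then have "(T ^^ n) ` ?L' \<subseteq> Lat B" using N by blast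
    then have "(T ^^ n) x \<in> Lat B" using \<open>x \<in> ?L'\<close> by blast
    then show ?thesis using B(2) by blast
  qed
  then show ?thesis by blast
qed

lemma open_Tset: "openin \<tau> W \<Longrightarrow> openin \<tau> {v. \<forall>n\<le>N. (T ^^ n) v \<in> W}"
proof (induction N)
  case 0
  then show ?case by simp
next
  case (Suc N)
  have "{v. \<forall>n\<le>Suc N. (T ^^ n) v \<in> W} = {v. \<forall>n\<le>N. (T ^^ n) v \<in> W} \<inter> {v. (T ^^ Suc N) v \<in> W}"
    by (auto simp: le_Suc_eq)
  then show ?case using Suc Tn_preimage_open[of W "Suc N"] by (simp add: openin_Int)
qed

lemma conv_unif:
  assumes W: "openin \<tau> W" "0 \<in> W"
  shows "\<exists>V. openin \<tau> V \<and> 0 \<in> V \<and> (\<forall>v\<in>V. \<forall>n. (T ^^ n) v \<in> W)"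
proof -
  obtain B where B: "finite B" "Lat B \<subseteq> W" using Lat_small[OF W] by blast
  have "lattice s \<tau> (Lat {})" by (rule Lat_lattice) simp
  moreover have "lattice s \<tau> (Lat B)" using B(1) by (rule Lat_lattice)
  ultimately obtain N where N: "\<forall>n>N. (T ^^ n) ` Lat {} \<subseteq> Lat B" using hyp by blast
  let ?V = "Lat {} \<inter> {v. \<forall>n\<le>N. (T ^^ n) v \<in> W}"
  show ?thesis
  proof (intro exI[of _ ?V] conjI ballI allI)
    show "openin \<tau> ?V" using Lat_open[of "{}"] open_Tset[OF W(1)] by (simp add: openin_Int)
    show "0 \<in> ?V" using Lat_submod W(2) unfolding lsubmod_def by (simp add: Tn_0)
    fix v n assume v: "v \<in> ?V"
    show "(T ^^ n) v \<in> W"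
    proof (cases "n \<le> N")
      case True
      then show ?thesis using v by blast
    next
      case False
      then have "n > N" by simp
      then have "(T ^^ n) ` Lat {} \<subseteq> Lat B" using N by blast
      moreover have "v \<in> Lat {}" using v by blast
      ultimately have "(T ^^ n) v \<in> Lat B" by blast
      then show ?thesis using B(2) by blast
    qed
  qed
qed

end

lemma lmod_times: "lmod ((*) :: 'r::ring_1 \<Rightarrow> 'r \<Rightarrow> 'r)"
  by (simp add: lmod_def algebra_simps)

context tctxT
begin

definition Pn :: "'r fps \<Rightarrow> 'm \<Rightarrow> nat \<Rightarrow> 'm" where
  "Pn f x N = (\<Sum>n<N. s (fps_nth f n) ((T ^^ n) x))"

lemma Pn_Suc: "Pn f x (Suc N) = Pn f x N + s (fps_nth f N) ((T ^^ N) x)"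
  unfolding Pn_def by simp

lemma psi_Pn:
  fixes \<psi> :: "'m \<Rightarrow> 'a::ab_group_add"
  assumes add: "\<And>x y. \<psi> (x + y) = \<psi> x + \<psi> y" and sc: "\<And>r x. \<psi> (s r x) = sA r (\<psi> x)"
  shows "\<psi> (Pn f x N) = (\<Sum>n<N. sA (fps_nth f n) (\<psi> ((T ^^ n) x)))"
  unfolding Pn_def additive_sum[of \<psi>, OF add] sc ..

lemma psi_stable:
  fixes \<psi> :: "'m \<Rightarrow> 'a::ab_group_add"
  assumes add: "\<And>x y. \<psi> (x + y) = \<psi> x + \<psi> y" and sc: "\<And>r x. \<psi> (s r x) = sA r (\<psi> x)"
    and lm: "lmod sA" and z: "\<forall>n\<ge>K. \<psi> ((T ^^ n) x) = 0"
  shows "\<forall>N\<ge>K. \<psi> (Pn f x N) = \<psi> (Pn f x K)"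
proof (intro allI impI)
  fix N assume "K \<le> N"
  then show "\<psi> (Pn f x N) = \<psi> (Pn f x K)"
  proof (induction N rule: dec_induct)
    case base
    then show ?case by simp
  next
    case (step N)
    have "\<psi> (Pn f x (Suc N)) = \<psi> (Pn f x N) + sA (fps_nth f N) (\<psi> ((T ^^ N) x))"
      by (simp add: Pn_Suc add sc)
    also have "\<psi> ((T ^^ N) x) = 0" using z step(1) by blast
    finally show ?case using step(3) by (simp add: lmod_zero[OF lm])
  qed
qed

end

context tctxH
begin

lemma psi_ev:
  fixes \<psi> :: "'m \<Rightarrow> 'a::ab_group_add"
  assumes add: "\<And>x y. \<psi> (x + y) = \<psi> x + \<psi> y" and sc: "\<And>r x. \<psi> (s r x) = sA r (\<psi> x)"
    and lm: "lmod sA" and op: "openin \<tau> {z. \<psi> z = 0}"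
  shows "\<exists>K. \<forall>N\<ge>K. \<psi> (Pn f x N) = ev (\<lambda>N. \<psi> (Pn f x N))"
proof -
  have "\<psi> 0 = 0" using add by (rule additive_0)
  then obtain K where K: "\<forall>n\<ge>K. (T ^^ n) x \<in> {z. \<psi> z = 0}" using conv_pt[OF op] by blast
  then have st: "\<forall>N\<ge>K. \<psi> (Pn f x N) = \<psi> (Pn f x K)" using psi_stable[OF add sc lm] by blast
  then have "ev (\<lambda>N. \<psi> (Pn f x N)) = \<psi> (Pn f x K)" by (rule ev_const)
  then show ?thesis using st by metis
qed

lemma psi_loc:
  fixes \<psi> :: "'m \<Rightarrow> 'a::ab_group_add"
  assumes add: "\<And>x y. \<psi> (x + y) = \<psi> x + \<psi> y" and sc: "\<And>r x. \<psi> (s r x) = sA r (\<psi> x)"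
    and lm: "lmod sA" and op: "openin \<tau> {z. \<psi> z = 0}"
  shows "\<exists>U. openin (prod_topology euclidean \<tau>) U \<and> (f0, x0) \<in> U \<and>
     (\<forall>p\<in>U. ev (\<lambda>N. \<psi> (Pn (fst p) (snd p) N)) = ev (\<lambda>N. \<psi> (Pn f0 x0 N)))"
proof -
  have z0: "\<psi> 0 = 0" using add by (rule additive_0)
  obtain V where V: "openin \<tau> V" "0 \<in> V" "\<forall>v\<in>V. \<forall>n. (T ^^ n) v \<in> {z. \<psi> z = 0}"
    using conv_unif[OF op] z0 by auto
  obtain K0 where K0: "\<forall>n\<ge>K0. (T ^^ n) x0 \<in> {z. \<psi> z = 0}" using conv_pt[OF op] z0 by blast
  let ?U = "ball f0 (inverse (2 ^ K0)) \<times> {x. x - x0 \<in> V}"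
  have st0: "\<forall>N\<ge>K0. \<psi> (Pn f0 x0 N) = \<psi> (Pn f0 x0 K0)"
    using psi_stable[OF add sc lm] K0 by blast
  have ev0: "ev (\<lambda>N. \<psi> (Pn f0 x0 N)) = \<psi> (Pn f0 x0 K0)" using st0 by (rule ev_const)
  show ?thesis
  proof (intro exI[of _ ?U] conjI ballI)
    show "openin (prod_topology euclidean \<tau>) ?U"
      unfolding openin_prod_Times_iff using transl_open[OF V(1), of x0]
      by (simp add: open_openin[symmetric])
    show "(f0, x0) \<in> ?U" using V(2) by simp
    fix p assume p: "p \<in> ?U"
    obtain f x where fx: "p = (f, x)" by fastforce
    have d: "dist f0 f < inverse (2 ^ K0)" using p fx by simp
    have xv: "x - x0 \<in> V" using p fx by simp
    have same: "\<psi> ((T ^^ n) x) = \<psi> ((T ^^ n) x0)" for n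
    proof -
      have "(T ^^ n) x = (T ^^ n) (x - x0) + (T ^^ n) x0" by (metis Tn_add diff_add_cancel)
      moreover have "\<psi> ((T ^^ n) (x - x0)) = 0" using V(3) xv by blast
      ultimately show ?thesis by (simp add: add)
    qed
    have zx: "\<forall>n\<ge>K0. \<psi> ((T ^^ n) x) = 0" using K0 same by simp
    have st: "\<forall>N\<ge>K0. \<psi> (Pn f x N) = \<psi> (Pn f x K0)"
      using psi_stable[OF add sc lm zx] by blast
    have eqK: "\<psi> (Pn f x K0) = \<psi> (Pn f0 x0 K0)"
    proof -
      have "\<psi> (Pn f x K0) = (\<Sum>n<K0. sA (fps_nth f n) (\<psi> ((T ^^ n) x)))" by (rule psi_Pn[OF add sc, of f x K0])
      also have "\<dots> = (\<Sum>n<K0. sA (fps_nth f0 n) (\<psi> ((T ^^ n) x0)))"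
      proof (intro sum.cong refl)
        fix n assume "n \<in> {..<K0}"
        then have "n \<le> K0" by simp
        then have "fps_nth f0 n = fps_nth f n" by (rule dist_fps_coeff[OF d])
        then show "sA (fps_nth f n) (\<psi> ((T ^^ n) x)) = sA (fps_nth f0 n) (\<psi> ((T ^^ n) x0))"
          using same[of n] by simp
      qed
      also have "\<dots> = \<psi> (Pn f0 x0 K0)" by (rule psi_Pn[OF add sc, of f0 x0 K0, symmetric])
      finally show ?thesis .
    qed
    have "\<forall>N\<ge>K0. \<psi> (Pn f x N) = \<psi> (Pn f0 x0 K0)"
    proof (intro allI impI)
      fix N assume "K0 \<le> N"
      then have "\<psi> (Pn f x N) = \<psi> (Pn f x K0)" using st by blast
      then show "\<psi> (Pn f x N) = \<psi> (Pn f0 x0 K0)" using eqK by (rule trans)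
    qed
    then have "ev (\<lambda>N. \<psi> (Pn f x N)) = \<psi> (Pn f0 x0 K0)" by (rule ev_const)
    then show "ev (\<lambda>N. \<psi> (Pn (fst p) (snd p) N)) = ev (\<lambda>N. \<psi> (Pn f0 x0 N))"
      using ev0 fx by simp
  qed
qed

lemma openF: "openin \<tau> {z. fst (i z) = 0}"
  unfolding open_iff
proof (intro ballI exI[of _ "{}"] conjI allI impI)
  fix x y assume "x \<in> {z. fst (i z) = 0}" "agr {} x y"
  then show "y \<in> {z. fst (i z) = 0}" by (simp add: agr_def)
qed simp

lemma openS: "openin \<tau> {z. snd (i z) q = 0}"
  unfolding open_iff
proof (intro ballI exI[of _ "{q}"] conjI allI impI)
  fix x y assume "x \<in> {z. snd (i z) q = 0}" "agr {q} x y"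
  then show "y \<in> {z. snd (i z) q = 0}" by (simp add: agr_def)
qed simp

lemma evF: "\<exists>K. \<forall>N\<ge>K. fst (i (Pn f x N)) = ev (\<lambda>N. fst (i (Pn f x N)))"
  by (rule psi_ev[of "\<lambda>z. fst (i z)" sP, OF fst_i_add fst_i_scale lmod_sP openF])
lemma evS: "\<exists>K. \<forall>N\<ge>K. snd (i (Pn f x N)) q = ev (\<lambda>N. snd (i (Pn f x N)) q)"
  by (rule psi_ev[of "\<lambda>z. snd (i z) q" "(*)", OF snd_i_add snd_i_scale lmod_times openS])
lemma locF: "\<exists>U. openin (prod_topology euclidean \<tau>) U \<and> (f0, x0) \<in> U \<and>
     (\<forall>p\<in>U. ev (\<lambda>N. fst (i (Pn (fst p) (snd p) N))) = ev (\<lambda>N. fst (i (Pn f0 x0 N))))"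
  by (rule psi_loc[of "\<lambda>z. fst (i z)" sP, OF fst_i_add fst_i_scale lmod_sP openF])
lemma locS: "\<exists>U. openin (prod_topology euclidean \<tau>) U \<and> (f0, x0) \<in> U \<and>
     (\<forall>p\<in>U. ev (\<lambda>N. snd (i (Pn (fst p) (snd p) N)) q) = ev (\<lambda>N. snd (i (Pn f0 x0 N)) q))"
  by (rule psi_loc[of "\<lambda>z. snd (i z) q" "(*)", OF snd_i_add snd_i_scale lmod_times openS])

definition YF :: "'r fps \<Rightarrow> 'm \<Rightarrow> 'p" where
  "YF f x = ev (\<lambda>N. fst (i (Pn f x N)))"
definition YS :: "'r fps \<Rightarrow> 'm \<Rightarrow> 'q \<Rightarrow> 'r" where
  "YS f x = (\<lambda>q. ev (\<lambda>N. snd (i (Pn f x N)) q))"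
definition Sd :: "'r fps \<Rightarrow> 'm \<Rightarrow> 'm" where
  "Sd f x = pr (YF f x, YS f x)"

lemma YS_rdual: "YS f x \<in> rdual sQ"
  unfolding rdual_def
proof (intro CollectI conjI allI)
  fix q1 q2
  obtain K1 where K1: "\<forall>N\<ge>K1. snd (i (Pn f x N)) q1 = YS f x q1" using evS[of f x q1] unfolding YS_def by blast
  obtain K2 where K2: "\<forall>N\<ge>K2. snd (i (Pn f x N)) q2 = YS f x q2" using evS[of f x q2] unfolding YS_def by blast
  obtain K3 where K3: "\<forall>N\<ge>K3. snd (i (Pn f x N)) (q1 + q2) = YS f x (q1 + q2)" using evS[of f x "q1 + q2"] unfolding YS_def by blast
  let ?N = "max K1 (max K2 K3)"
  have "YS f x (q1 + q2) = snd (i (Pn f x ?N)) (q1 + q2)" using K3 by simp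
  also have "\<dots> = snd (i (Pn f x ?N)) q1 + snd (i (Pn f x ?N)) q2" by (rule rdual_add[OF i_rdual])
  also have "\<dots> = YS f x q1 + YS f x q2" using K1 K2 by simp
  finally show "YS f x (q1 + q2) = YS f x q1 + YS f x q2" .
next
  fix q r
  obtain K1 where K1: "\<forall>N\<ge>K1. snd (i (Pn f x N)) q = YS f x q" using evS[of f x q] unfolding YS_def by blast
  obtain K3 where K3: "\<forall>N\<ge>K3. snd (i (Pn f x N)) (sQ q r) = YS f x (sQ q r)" using evS[of f x "sQ q r"] unfolding YS_def by blast
  let ?N = "max K1 K3"
  have "YS f x (sQ q r) = snd (i (Pn f x ?N)) (sQ q r)" using K3 by simp
  also have "\<dots> = snd (i (Pn f x ?N)) q * r" by (rule rdual_scale[OF i_rdual])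
  also have "\<dots> = YS f x q * r" using K1 by simp
  finally show "YS f x (sQ q r) = YS f x q * r" .
qed

lemma Pn_lim: "limitin \<tau> (Pn f x) (Sd f x) sequentially"
  unfolding Sd_def
proof (rule S_limit)
  show "(YF f x, YS f x) \<in> UNIV \<times> rdual sQ" using YS_rdual by (simp add: mem_Times_iff)
  obtain K where K: "\<forall>N\<ge>K. fst (i (Pn f x N)) = YF f x" using evF[of f x] unfolding YF_def by blast
  then show "\<forall>\<^sub>F N in sequentially. fst (i (Pn f x N)) = fst (YF f x, YS f x)"
    unfolding eventually_sequentially by auto
  fix q
  obtain K where K: "\<forall>N\<ge>K. snd (i (Pn f x N)) q = YS f x q" using evS[of f x q] unfolding YS_def by blast
  then show "\<forall>\<^sub>F N in sequentially. snd (i (Pn f x N)) q = snd (YF f x, YS f x) q"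
    unfolding eventually_sequentially by auto
qed

lemma Y_cont: "continuous_map (prod_topology euclidean \<tau>) (PQ_top sQ) (\<lambda>p. (YF (fst p) (snd p), YS (fst p) (snd p)))"
  unfolding PQ_top_def
proof (rule continuous_map_pairedI)
  show "continuous_map (prod_topology euclidean \<tau>) (discrete_topology UNIV) (\<lambda>p. YF (fst p) (snd p))"
  proof (rule cont_discrete)
    fix z :: "'r fps \<times> 'm"
    obtain U where U: "openin (prod_topology euclidean \<tau>) U" "(fst z, snd z) \<in> U"
      "\<forall>p\<in>U. ev (\<lambda>N. fst (i (Pn (fst p) (snd p) N))) = ev (\<lambda>N. fst (i (Pn (fst z) (snd z) N)))"
      using locF[of "fst z" "snd z"] by (elim exE conjE) (rule that)
    show "\<exists>U. openin (prod_topology euclidean \<tau>) U \<and> z \<in> U \<and> (\<forall>w\<in>U. YF (fst w) (snd w) = YF (fst z) (snd z))"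
    proof (intro exI[of _ U] conjI ballI)
      show "openin (prod_topology euclidean \<tau>) U" by (rule U(1))
      show "z \<in> U" using U(2) by simp
      fix w assume "w \<in> U"
      then show "YF (fst w) (snd w) = YF (fst z) (snd z)" unfolding YF_def using U(3) by blast
    qed
  qed
  show "continuous_map (prod_topology euclidean \<tau>) (rdual_top sQ) (\<lambda>p. YS (fst p) (snd p))"
    unfolding rdual_top_def continuous_map_in_subtopology
  proof (intro conjI)
    show "(\<lambda>p. YS (fst p) (snd p)) \<in> topspace (prod_topology euclidean \<tau>) \<rightarrow> rdual sQ"
      using YS_rdual by blast
    show "continuous_map (prod_topology euclidean \<tau>) (product_topology (\<lambda>_. discrete_topology UNIV) UNIV) (\<lambda>p. YS (fst p) (snd p))"
      unfolding continuous_map_componentwise_UNIV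
    proof (intro allI cont_discrete)
      fix q and z :: "'r fps \<times> 'm"
      obtain U where U: "openin (prod_topology euclidean \<tau>) U" "(fst z, snd z) \<in> U"
        "\<forall>p\<in>U. ev (\<lambda>N. snd (i (Pn (fst p) (snd p) N)) q) = ev (\<lambda>N. snd (i (Pn (fst z) (snd z) N)) q)"
        using locS[of "fst z" "snd z" q] by (elim exE conjE) (rule that)
      show "\<exists>U. openin (prod_topology euclidean \<tau>) U \<and> z \<in> U \<and> (\<forall>w\<in>U. YS (fst w) (snd w) q = YS (fst z) (snd z) q)"
      proof (intro exI[of _ U] conjI ballI)
        show "openin (prod_topology euclidean \<tau>) U" by (rule U(1))
        show "z \<in> U" using U(2) by simp
        fix w assume "w \<in> U"
        then show "YS (fst w) (snd w) q = YS (fst z) (snd z) q" unfolding YS_def using U(3) by blast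
      qed
    qed
  qed
qed

lemma Sd_cont: "continuous_map (prod_topology euclidean \<tau>) \<tau> (\<lambda>(f, x). Sd f x)"
proof -
  have "(\<lambda>(f, x). Sd f x) = pr \<circ> (\<lambda>p. (YF (fst p) (snd p), YS (fst p) (snd p)))"
    by (auto simp: fun_eq_iff Sd_def)
  then show ?thesis using continuous_map_compose[OF Y_cont pr_cont] by simp
qed

end

context tctx
begin

lemma lim_unique: "limitin \<tau> a l sequentially \<Longrightarrow> limitin \<tau> a l' sequentially \<Longrightarrow> l = l'"
  by (rule limitin_Hausdorff_unique[OF _ _ trivial_limit_sequentially Hausdorff])

lemma lim_add:
  assumes "limitin \<tau> a l F" "limitin \<tau> b l' F"
  shows "limitin \<tau> (\<lambda>N. a N + b N) (l + l') F"
proof -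
  have "limitin (prod_topology \<tau> \<tau>) (\<lambda>N. (a N, b N)) (l, l') F"
    using assms by (simp add: limitin_pairwise o_def)
  from continuous_map_limit[OF add_cont this] show ?thesis by (simp add: o_def)
qed

lemma lim_cont: "continuous_map \<tau> \<tau> g \<Longrightarrow> limitin \<tau> a l F \<Longrightarrow> limitin \<tau> (\<lambda>N. g (a N)) (g l) F"
  using continuous_map_limit[of \<tau> \<tau> g a l F] by (simp add: o_def)

lemma principle:
  fixes \<Phi> \<Psi> :: "'r fps \<Rightarrow> 'm"
  assumes a1: "\<And>f g. \<Phi> (f + g) = \<Phi> f + \<Phi> g" and a2: "\<And>f g. \<Psi> (f + g) = \<Psi> f + \<Psi> g"
    and c1: "continuous_map euclidean \<tau> \<Phi>" and c2: "continuous_map euclidean \<tau> \<Psi>"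
    and m: "\<And>c n. \<Phi> (fps_const c * fps_X ^ n) = \<Psi> (fps_const c * fps_X ^ n)"
  shows "\<Phi> f = \<Psi> f"
proof -
  let ?t = "\<lambda>n. \<Sum>i = 0..n. fps_const (fps_nth f i) * fps_X ^ i"
  have lt: "limitin euclidean ?t f sequentially"
    using fps_notation[of f] by (simp add: limitin_canonical_iff)
  have l1: "limitin \<tau> (\<Phi> \<circ> ?t) (\<Phi> f) sequentially" by (rule continuous_map_limit[OF c1 lt])
  have l2: "limitin \<tau> (\<Psi> \<circ> ?t) (\<Psi> f) sequentially" by (rule continuous_map_limit[OF c2 lt])
  have "\<Phi> \<circ> ?t = \<Psi> \<circ> ?t"
  proof
    fix n
    have "(\<Phi> \<circ> ?t) n = (\<Sum>i = 0..n. \<Phi> (fps_const (fps_nth f i) * fps_X ^ i))"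
      using additive_sum[of \<Phi>, OF a1] by simp
    also have "\<dots> = (\<Sum>i = 0..n. \<Psi> (fps_const (fps_nth f i) * fps_X ^ i))"
      by (simp add: m)
    also have "\<dots> = (\<Psi> \<circ> ?t) n"
      by (simp add: additive_sum[of \<Psi>, OF a2])
    finally show "(\<Phi> \<circ> ?t) n = (\<Psi> \<circ> ?t) n" .
  qed
  then show ?thesis using l1 l2 lim_unique by metis
qed

end

context tctxT
begin

lemma Pn_add_x: "Pn f (x + y) N = Pn f x N + Pn f y N"
  unfolding Pn_def by (simp add: Tn_add lmod_add[OF lmod_s] sum.distrib)

lemma Pn_add_f: "Pn (f + g) x N = Pn f x N + Pn g x N"
  unfolding Pn_def by (simp add: lmod_radd[OF lmod_s] sum.distrib)

lemma sum_single0: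
  fixes h :: "nat \<Rightarrow> 'm"
  assumes "k < N" "\<And>n. n \<noteq> k \<Longrightarrow> h n = 0"
  shows "(\<Sum>n<N. h n) = h k"
proof -
  have "(\<Sum>n<N. h n) = (\<Sum>n<N. if n = k then h k else 0)"
    using assms(2) by (intro sum.cong) auto
  also have "\<dots> = h k" using assms(1) by (simp add: sum.delta)
  finally show ?thesis .
qed

lemma Pn_const: "N \<ge> 1 \<Longrightarrow> Pn (fps_const r) x N = s r x"
  unfolding Pn_def by (subst sum_single0[of 0]) (auto simp: lmod_rzero[OF lmod_s])

lemma Pn_X: "N \<ge> 2 \<Longrightarrow> Pn fps_X x N = T x"
  unfolding Pn_def by (subst sum_single0[of 1]) (auto simp: lmod_rzero[OF lmod_s] lmod_one[OF lmod_s])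

lemma Pn_mono: "N > k \<Longrightarrow> Pn (fps_const c * fps_X ^ k) y N = s c ((T ^^ k) y)"
  unfolding Pn_def by (subst sum_single0[of k]) (auto simp: lmod_rzero[OF lmod_s])

lemma hcoef: "fps_nth (fps_const c * fps_X ^ k * g) n = (if n < k then 0 else c * fps_nth g (n - k))"
  by (simp add: mult.assoc fps_X_power_mult_nth)

lemma Pn_shift: "Pn (fps_const c * fps_X ^ k * g) x (N + k) = s c ((T ^^ k) (Pn g x N))"
proof (induction N)
  case 0
  have "Pn (fps_const c * fps_X ^ k * g) x k = 0"
    unfolding Pn_def by (intro sum.neutral) (simp add: hcoef lmod_rzero[OF lmod_s])
  moreover have "Pn g x 0 = 0" unfolding Pn_def by simp
  ultimately show ?case by (simp add: Tn_0 lmod_zero[OF lmod_s])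
next
  case (Suc N)
  have "Pn (fps_const c * fps_X ^ k * g) x (Suc N + k)
      = Pn (fps_const c * fps_X ^ k * g) x (N + k) + s (c * fps_nth g N) ((T ^^ (N + k)) x)"
    using Pn_Suc[of "fps_const c * fps_X ^ k * g" x "N + k"] by (simp add: hcoef)
  also have "(T ^^ (N + k)) x = (T ^^ k) ((T ^^ N) x)"
    by (metis add.commute comp_apply funpow_add)
  also have "s (c * fps_nth g N) ((T ^^ k) ((T ^^ N) x)) = s c ((T ^^ k) (s (fps_nth g N) ((T ^^ N) x)))"
    by (simp add: lmod_mult[OF lmod_s] Tn_lin)
  finally show ?case
    using Suc by (simp add: Pn_Suc Tn_add lmod_add[OF lmod_s])
qed

end

context tctxH
begin

lemma Sd_add_x: "Sd f (x + y) = Sd f x + Sd f y"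
proof -
  have "limitin \<tau> (\<lambda>N. Pn f x N + Pn f y N) (Sd f x + Sd f y) sequentially"
    by (rule lim_add[OF Pn_lim Pn_lim])
  then have "limitin \<tau> (Pn f (x + y)) (Sd f x + Sd f y) sequentially"
    by (simp add: Pn_add_x[abs_def])
  then show ?thesis using Pn_lim lim_unique by blast
qed

lemma Sd_add_f: "Sd (f + g) x = Sd f x + Sd g x"
proof -
  have "limitin \<tau> (\<lambda>N. Pn f x N + Pn g x N) (Sd f x + Sd g x) sequentially"
    by (rule lim_add[OF Pn_lim Pn_lim])
  then have "limitin \<tau> (Pn (f + g) x) (Sd f x + Sd g x) sequentially"
    by (simp add: Pn_add_f[abs_def])
  then show ?thesis using Pn_lim lim_unique by blast
qed

lemma Sd_evconst:
  assumes "\<forall>N\<ge>K. Pn f x N = z"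
  shows "Sd f x = z"
proof -
  have "limitin \<tau> (Pn f x) z sequentially"
    by (rule limitin_eventually) (use assms in \<open>auto simp: top_UNIV eventually_sequentially\<close>)
  then show ?thesis using Pn_lim lim_unique by blast
qed

lemma Sd_const: "Sd (fps_const r) x = s r x"
  by (rule Sd_evconst[of 1]) (simp add: Pn_const)

lemma Sd_X: "Sd fps_X x = T x"
  by (rule Sd_evconst[of 2]) (simp add: Pn_X)

lemma Sd_mono: "Sd (fps_const c * fps_X ^ k) y = s c ((T ^^ k) y)"
  by (rule Sd_evconst[of "Suc k"]) (simp add: Pn_mono)

lemma Sd_shift: "Sd (fps_const c * fps_X ^ k * g) x = s c ((T ^^ k) (Sd g x))"
proof -
  have l1: "limitin \<tau> (\<lambda>N. Pn (fps_const c * fps_X ^ k * g) x (N + k)) (Sd (fps_const c * fps_X ^ k * g) x) sequentially"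
    by (rule limitin_sequentially_offset[OF Pn_lim])
  have "limitin \<tau> (\<lambda>N. (T ^^ k) (Pn g x N)) ((T ^^ k) (Sd g x)) sequentially"
    by (rule lim_cont[OF Tn_cont Pn_lim])
  then have "limitin \<tau> (\<lambda>N. s c ((T ^^ k) (Pn g x N))) (s c ((T ^^ k) (Sd g x))) sequentially"
    by (rule lim_cont[OF scale_cont])
  then have l2: "limitin \<tau> (\<lambda>N. Pn (fps_const c * fps_X ^ k * g) x (N + k)) (s c ((T ^^ k) (Sd g x))) sequentially"
    by (simp add: Pn_shift)
  show ?thesis using lim_unique[OF l1 l2] .
qed

lemma Sd_cont_f: "continuous_map euclidean \<tau> (\<lambda>f. Sd f y)"
proof -
  have "continuous_map euclidean (prod_topology euclidean \<tau>) (\<lambda>f. (f, y))"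
    by (intro continuous_map_pairedI) (simp_all add: top_UNIV)
  from continuous_map_compose[OF this Sd_cont] show ?thesis by (simp add: o_def)
qed

lemma Sd_mult: "Sd (f * g) x = Sd f (Sd g x)"
proof (rule principle[where \<Phi> = "\<lambda>f. Sd (f * g) x" and \<Psi> = "\<lambda>f. Sd f (Sd g x)"])
  show "Sd ((f1 + f2) * g) x = Sd (f1 * g) x + Sd (f2 * g) x" for f1 f2
    by (simp add: distrib_right Sd_add_f)
  show "Sd (f1 + f2) (Sd g x) = Sd f1 (Sd g x) + Sd f2 (Sd g x)" for f1 f2
    by (rule Sd_add_f)
  show "continuous_map euclidean \<tau> (\<lambda>f. Sd (f * g) x)"
    using continuous_map_compose[OF mult_right_cont Sd_cont_f] by (simp add: o_def)
  show "continuous_map euclidean \<tau> (\<lambda>f. Sd f (Sd g x))" by (rule Sd_cont_f)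
  show "Sd (fps_const c * fps_X ^ n * g) x = Sd (fps_const c * fps_X ^ n) (Sd g x)" for c n
    by (simp add: Sd_shift Sd_mono)
qed

lemma Sd_one: "Sd 1 x = x"
  using Sd_const[of 1 x] by (simp add: lmod_one[OF lmod_s])

lemma exist: "tadic_structure s \<tau> T Sd"
  unfolding tadic_structure_def lmod_def
  using Sd_add_x Sd_add_f Sd_mult Sd_one Sd_const Sd_X Sd_cont add_cont by blast

end

context tctxT
begin

lemma tadicD:
  assumes "tadic_structure s \<tau> T S"
  shows "lmod S" "\<And>r x. S (fps_const r) x = s r x" "\<And>x. S fps_X x = T x"
    "continuous_map (prod_topology euclidean \<tau>) \<tau> (\<lambda>(f, x). S f x)"
  using assms unfolding tadic_structure_def by auto

lemma S_Xpow:
  assumes "tadic_structure s \<tau> T S"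
  shows "S (fps_X ^ n) y = (T ^^ n) y"
proof (induction n arbitrary: y)
  case 0
  have "S (fps_const 1) y = s 1 y" by (rule tadicD(2)[OF assms])
  then show ?case by (simp add: lmod_one[OF lmod_s])
next
  case (Suc n)
  have "S (fps_X ^ Suc n) y = S (fps_X * fps_X ^ n) y" by simp
  also have "\<dots> = S fps_X (S (fps_X ^ n) y)" by (rule lmod_mult[OF tadicD(1)[OF assms]])
  also have "\<dots> = T ((T ^^ n) y)" by (simp add: Suc tadicD(3)[OF assms])
  finally show ?case by simp
qed

lemma S_cont_f:
  assumes "tadic_structure s \<tau> T S"
  shows "continuous_map euclidean \<tau> (\<lambda>f. S f y)"
proof -
  have "continuous_map euclidean (prod_topology euclidean \<tau>) (\<lambda>f. (f, y))"
    by (intro continuous_map_pairedI) (simp_all add: top_UNIV)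
  from continuous_map_compose[OF this tadicD(4)[OF assms]] show ?thesis by (simp add: o_def)
qed

lemma S_mono:
  assumes "tadic_structure s \<tau> T S"
  shows "S (fps_const c * fps_X ^ n) x = s c ((T ^^ n) x)"
  using lmod_mult[OF tadicD(1)[OF assms], of "fps_const c" "fps_X ^ n" x]
  by (simp add: S_Xpow[OF assms] tadicD(2)[OF assms])

lemma unique:
  assumes "tadic_structure s \<tau> T S1" "tadic_structure s \<tau> T S2"
  shows "S1 = S2"
proof (intro ext)
  fix f x
  show "S1 f x = S2 f x"
  proof (rule principle[where \<Phi> = "\<lambda>f. S1 f x" and \<Psi> = "\<lambda>f. S2 f x"])
    show "S1 (f + g) x = S1 f x + S1 g x" for f g by (rule lmod_radd[OF tadicD(1)[OF assms(1)]])
    show "S2 (f + g) x = S2 f x + S2 g x" for f g by (rule lmod_radd[OF tadicD(1)[OF assms(2)]])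
    show "continuous_map euclidean \<tau> (\<lambda>f. S1 f x)" by (rule S_cont_f[OF assms(1)])
    show "continuous_map euclidean \<tau> (\<lambda>f. S2 f x)" by (rule S_cont_f[OF assms(2)])
    show "S1 (fps_const c * fps_X ^ n) x = S2 (fps_const c * fps_X ^ n) x" for c n
      by (simp add: S_mono[OF assms(1)] S_mono[OF assms(2)])
  qed
qed

lemma agr0: "agr F 0 y \<longleftrightarrow> fst (i y) = 0 \<and> (\<forall>q\<in>F. snd (i y) q = 0)"
  by (simp add: agr_def)

lemma conv:
  assumes St: "tadic_structure s \<tau> T S" and L: "lattice s \<tau> L" and L': "lattice s \<tau> L'"
  shows "\<exists>N. \<forall>n>N. (T ^^ n) ` L' \<subseteq> L"
proof -
  have Lo: "openin \<tau> L" and Ls: "lsubmod s L" using L unfolding lattice_def by auto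
  have L'o: "openin \<tau> L'" and L's: "lsubmod s L'"
    and L'f: "\<And>U. openin \<tau> U \<Longrightarrow> lsubmod s U \<Longrightarrow> U \<subseteq> L' \<Longrightarrow> fg_quotient s L' U"
    using L' unfolding lattice_def by auto
  have L0: "0 \<in> L" using Ls unfolding lsubmod_def by blast
  have L'0: "0 \<in> L'" using L's unfolding lsubmod_def by blast
  have lS: "lmod S" by (rule tadicD(1)[OF St])
  have S0: "S 0 y = 0" for y
    using lmod_radd[OF lS, of 0 0 y] by simp
  define A where "A = {p \<in> topspace (prod_topology euclidean \<tau>). (\<lambda>(f, x). S f x) p \<in> L}"
  have Ao: "openin (prod_topology euclidean \<tau>) A"
    unfolding A_def by (rule openin_continuous_map_preimage[OF tadicD(4)[OF St] Lo])
  have A0: "(0, 0) \<in> A" unfolding A_def using L0 S0 by (simp add: top_UNIV)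
  obtain U V where UV: "openin euclidean U" "openin \<tau> V" "0 \<in> U" "0 \<in> V" "U \<times> V \<subseteq> A"
    using Ao[unfolded openin_prod_topology_alt, rule_format, of 0 0, OF A0] by (elim exE conjE) (rule that)
  obtain e where e: "e > 0" "ball 0 e \<subseteq> U"
    using UV(1,3) by (auto simp: open_openin[symmetric] open_contains_ball_eq)
  obtain k where k: "inverse (2 ^ k) < e" using pow_small[OF e(1)] by blast
  have claim1: "(T ^^ n) v \<in> L" if "n \<ge> k" "v \<in> V" for n v
  proof -
    have "dist (fps_X ^ n :: 'r fps) 0 \<le> inverse (2 ^ n)" by (rule dist_fps_le) simp
    also have "\<dots> \<le> inverse (2 ^ k)" using that(1) by (rule inverse_pow_mono)
    finally have "dist (fps_X ^ n :: 'r fps) 0 < e" using k by linarith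
    then have "(fps_X ^ n :: 'r fps) \<in> ball 0 e" by (simp add: dist_commute)
    then have "(fps_X ^ n, v) \<in> A" using e(2) UV(5) that(2) by blast
    then have "S (fps_X ^ n) v \<in> L" unfolding A_def by simp
    then show ?thesis by (simp add: S_Xpow[OF St])
  qed
  have "openin \<tau> (V \<inter> L')" using UV(2) L'o by (rule openin_Int)
  moreover have "0 \<in> V \<inter> L'" using UV(4) L'0 by simp
  ultimately obtain F where F: "finite F" "\<forall>y. agr F 0 y \<longrightarrow> y \<in> V \<inter> L'"
    unfolding open_iff by blast
  define U0 where "U0 = {y. agr F 0 y}"
  have U0o: "openin \<tau> U0" unfolding U0_def by (rule basic_open[OF F(1)])
  have U0s: "lsubmod s U0"
    unfolding lsubmod_def U0_def agr0 by (simp add: lmod_zero[OF lmod_sP])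
  have U0sub: "U0 \<subseteq> V \<inter> L'" using F(2) unfolding U0_def by blast
  then have "fg_quotient s L' U0" using L'f U0o U0s by blast
  then obtain G where G: "finite G" "G \<subseteq> L'" "\<forall>x\<in>L'. \<exists>c. x - (\<Sum>g\<in>G. s (c g) g) \<in> U0"
    unfolding fg_quotient_def by blast
  have evg: "\<forall>\<^sub>F n in sequentially. (T ^^ n) g \<in> L" for g
  proof -
    have "limitin euclidean (\<lambda>n. fps_X ^ n :: 'r fps) 0 sequentially"
      using Xpow_tendsto by (simp add: limitin_canonical_iff)
    from continuous_map_limit[OF S_cont_f[OF St] this]
    have "limitin \<tau> (\<lambda>n. S (fps_X ^ n) g) 0 sequentially" by (simp add: o_def S0)
    from limitinD[OF this Lo L0] show ?thesis by (simp add: S_Xpow[OF St])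
  qed
  have e1: "\<forall>\<^sub>F n in sequentially. \<forall>g\<in>G. (T ^^ n) g \<in> L"
    by (rule eventually_ball_finite[OF G(1)]) (use evg in blast)
  have "\<forall>\<^sub>F n in sequentially. (\<forall>g\<in>G. (T ^^ n) g \<in> L) \<and> n \<ge> k"
    by (rule eventually_conj[OF e1 eventually_ge_at_top])
  then obtain N where N: "\<forall>n\<ge>N. (\<forall>g\<in>G. (T ^^ n) g \<in> L) \<and> n \<ge> k"
    unfolding eventually_sequentially by blast
  show ?thesis
  proof (intro exI[of _ N] allI impI subsetI)
    fix n z assume n: "n > N" and z: "z \<in> (T ^^ n) ` L'"
    then obtain x where x: "x \<in> L'" "z = (T ^^ n) x" by blast
    obtain c where c: "x - (\<Sum>g\<in>G. s (c g) g) \<in> U0" using G(3) x(1) by blast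
    define u where "u = x - (\<Sum>g\<in>G. s (c g) g)"
    have xu: "x = (\<Sum>g\<in>G. s (c g) g) + u" unfolding u_def by simp
    have Nn: "\<forall>g\<in>G. (T ^^ n) g \<in> L" "n \<ge> k" using N n by auto
    have "(T ^^ n) x = (\<Sum>g\<in>G. s (c g) ((T ^^ n) g)) + (T ^^ n) u"
      unfolding xu by (simp add: Tn_add Tn_sum Tn_lin)
    moreover have "(\<Sum>g\<in>G. s (c g) ((T ^^ n) g)) \<in> L"
      using Ls Nn(1) by (intro lsubmod_sum) (auto simp: lsubmod_def)
    moreover have "(T ^^ n) u \<in> L"
      using claim1[OF Nn(2)] U0sub c unfolding u_def by blast
    ultimately show "z \<in> L" using Ls x(2) unfolding lsubmod_def by simp
  qed
qed

end

theorem lemma3p9: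
  fixes s :: "'r::ring_1 \<Rightarrow> 'm::ab_group_add \<Rightarrow> 'm"
    and \<tau> :: "'m topology"
    and sP :: "'r \<Rightarrow> 'p::ab_group_add \<Rightarrow> 'p"
    and sQ :: "'q::ab_group_add \<Rightarrow> 'r \<Rightarrow> 'q"
    and i :: "'m \<Rightarrow> 'p \<times> ('q \<Rightarrow> 'r)"
    and pr :: "'p \<times> ('q \<Rightarrow> 'r) \<Rightarrow> 'm"
    and T :: "'m \<Rightarrow> 'm"
  assumes tate: "tate_witness s \<tau> sP sQ i pr"
    and T_add: "\<And>x y. T (x + y) = T x + T y"
    and T_lin: "\<And>r x. T (s r x) = s r (T x)"
    and T_cont: "continuous_map \<tau> \<tau> T"
  shows "(\<forall>L L'. lattice s \<tau> L \<and> lattice s \<tau> L' \<longrightarrow>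
            (\<exists>N::nat. \<forall>n>N. (T ^^ n) ` L' \<subseteq> L))
         \<longleftrightarrow> (\<exists>!S. tadic_structure s \<tau> T S)"
proof -
  have ctx: "tctxT s \<tau> sP sQ i pr T"
    by (intro tctxT.intro tctx.intro tctxT_axioms.intro tate T_add T_lin T_cont)
  show ?thesis
  proof
    assume h: "\<forall>L L'. lattice s \<tau> L \<and> lattice s \<tau> L' \<longrightarrow> (\<exists>N::nat. \<forall>n>N. (T ^^ n) ` L' \<subseteq> L)"
    have H: "tctxH s \<tau> sP sQ i pr T"
      by (intro tctxH.intro ctx tctxH_axioms.intro h)
    show "\<exists>!S. tadic_structure s \<tau> T S"
      using tctxH.exist[OF H] tctxT.unique[OF ctx] by blast
  next
    assume "\<exists>!S. tadic_structure s \<tau> T S"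
    then obtain S where S: "tadic_structure s \<tau> T S" by blast
    show "\<forall>L L'. lattice s \<tau> L \<and> lattice s \<tau> L' \<longrightarrow> (\<exists>N::nat. \<forall>n>N. (T ^^ n) ` L' \<subseteq> L)"
      using tctxT.conv[OF ctx S] by blast
  qed
qed

end
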